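(* Let $\mathcal{H}_S$ (system) and $\mathcal{H}_B$ (bath) be finite-dimensional Hilbert spaces, and fix a final time $T>0$. Let $t\mapsto \overline{H}_S(t)$ be a continuous family of Hermitian operators on $\mathcal{H}_S$ (the encoded system Hamiltonian), $H_B$ a Hermitian operator on $\mathcal{H}_B$, and set $H_0(t)=\overline{H}_S(t)\otimes I+I\otimes H_B$. Let $H_{\mathrm{p}}$ be a time-independent Hermitian operator on $\mathcal{H}_S$ (the penalty Hamiltonian, acting as $H_{\mathrm{p}}\otimes I$ on $\mathcal{H}_S\otimes\mathcal{H}_B$) with spectral decomposition $H_{\mathrm{p}}=\sum_a \lambda_a \Pi_a$ (distinct eigenvalues $\lambda_a$, spectral projectors $\Pi_a$), let $E_{\mathrm{p}}>0$, and let $V$ be a time-independent Hermitian operator on $\mathcal{H}_S\otimes\mathcal{H}_B$ (the system–bath interaction). Let $P$ be an orthogonal projection on $\mathcal{H}_S$ (acting as $P\otimes I$). Let $c\in\mathbb{R}$ and $W=cI$. Denote by $U_0(t)$, $U_{\mathrm{p}}(t)=e^{-iE_{\mathrm{p}}H_{\mathrm{p}}t}$ and $U_V(t)$ the unitary evolutions (solutions of $i\,\frac{d}{dt}U=H(t)U$, $U(0)=I$) generated respectively by $H_0(t)$, $E_{\mathrm{p}}H_{\mathrm{p}}$ and $H_V(t)=H_0(t)+E_{\mathrm{p}}H_{\mathrm{p}}+V$. Assume that for all $t\in[0,T]$ $$[\overline{H}_S(t),P]=[\overline{H}_S(t),H_{\mathrm{p}}]=0,$$ and that $$\sum_a \Pi_a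 V\Pi_a P=cP.$$ Then, for any unitarily invariant norm $\|\cdot\|$, $$\lim_{E_{\mathrm{p}}\to\infty}\big\|U_V(T)P-U_W(T)P\big\|=0,\qquad\text{where } U_W(T)=e^{-icT}U_0(T)U_{\mathrm{p}}(T).$$
   Context: All operators on $\mathcal{H}_S$ or $\mathcal{H}_B$ are regarded as operators on $\mathcal{H}_S\otimes\mathcal{H}_B$ by tensoring with the identity. $U_W$ is the evolution generated by $H_W=H_0+E_{\mathrm{p}}H_{\mathrm{p}}+W$ with $W=cI$. A norm is unitarily invariant if $\|UXV\|=\|X\|$ for all unitaries $U,V$. *)

theory Defs
  imports "HOL-Analysis.Analysis"
begin

text \<open>Finite-dimensional operators are complex square matrices indexed by a finite type.
  The composite space H_S (x) H_B is indexed by the product type.\<close>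

type_synonym 'n op = "complex ^'n ^'n"

definition cmat_smult :: "complex \<Rightarrow> 'n::finite op \<Rightarrow> 'n op" where
  "cmat_smult c A = (\<chi> i j. c * A $ i $ j)"

definition adjoint :: "'n::finite op \<Rightarrow> 'n op" where
  "adjoint A = (\<chi> i j. cnj (A $ j $ i))"

definition hermitian :: "'n::finite op \<Rightarrow> bool" where
  "hermitian A \<longleftrightarrow> adjoint A = A"

definition unitary :: "'n::finite op \<Rightarrow> bool" where
  "unitary U \<longleftrightarrow> adjoint U ** U = mat 1 \<and> U ** adjoint U = mat 1"

definition orth_proj :: "'n::finite op \<Rightarrow> bool" where
  "orth_proj P \<longleftrightarrow> hermitian P \<and> P ** P = P"

definition kron :: "'s::finite op \<Rightarrow> 'b::finite op \<Rightarrow> ('s \<times> 'b) op" where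
  "kron A B = (\<chi> p q. A $ fst p $ fst q * B $ snd p $ snd q)"

definition spectral_decomp :: "'n::finite op \<Rightarrow> real set \<Rightarrow> (real \<Rightarrow> 'n op) \<Rightarrow> bool" where
  "spectral_decomp H Lam Proj \<longleftrightarrow>
     finite Lam \<and>
     (\<forall>a\<in>Lam. orth_proj (Proj a) \<and> Proj a \<noteq> 0) \<and>
     (\<forall>a\<in>Lam. \<forall>b\<in>Lam. a \<noteq> b \<longrightarrow> Proj a ** Proj b = 0) \<and>
     (\<Sum>a\<in>Lam. Proj a) = mat 1 \<and>
     H = (\<Sum>a\<in>Lam. cmat_smult (complex_of_real a) (Proj a))"

definition evolution :: "real \<Rightarrow> (real \<Rightarrow> 'n::finite op) \<Rightarrow> (real \<Rightarrow> 'n op) \<Rightarrow> bool" where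
  "evolution T H U \<longleftrightarrow> U 0 = mat 1 \<and>
     (\<forall>t\<in>{0..T}. (U has_vector_derivative cmat_smult (- \<i>) (H t ** U t)) (at t within {0..T}))"

definition unitarily_invariant_norm :: "('n::finite op \<Rightarrow> real) \<Rightarrow> bool" where
  "unitarily_invariant_norm N \<longleftrightarrow>
     (\<forall>X. N X = 0 \<longleftrightarrow> X = 0) \<and>
     (\<forall>X Y. N (X + Y) \<le> N X + N Y) \<and>
     (\<forall>c X. N (cmat_smult c X) = cmod c * N X) \<and>
     (\<forall>U V X. unitary U \<longrightarrow> unitary V \<longrightarrow> N (U ** X ** V) = N X)"

end

theory Submission
  imports Defs
begin


lemma cs_mult_left: "cmat_smult c A ** B = cmat_smult c (A ** B)"
  by (simp add: cmat_smult_def matrix_matrix_mult_def vec_eq_iff sum_distrib_left mult.assoc)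
lemma cs_mult_right: "A ** cmat_smult c B = cmat_smult c (A ** B)"
  by (simp add: cmat_smult_def matrix_matrix_mult_def vec_eq_iff sum_distrib_left mult.assoc mult.left_commute)
lemma cs_cs: "cmat_smult a (cmat_smult b A) = cmat_smult (a*b) A"
  by (simp add: cmat_smult_def vec_eq_iff mult.assoc)
lemma cs_add: "cmat_smult a (A + B) = cmat_smult a A + cmat_smult a B"
  by (simp add: cmat_smult_def vec_eq_iff algebra_simps)
lemma cs_diff: "cmat_smult a (A - B) = cmat_smult a A - cmat_smult a B"
  by (simp add: cmat_smult_def vec_eq_iff algebra_simps)
lemma cs_add_scalar: "cmat_smult (a+b) A = cmat_smult a A + cmat_smult b A"
  by (simp add: cmat_smult_def vec_eq_iff algebra_simps)
lemma cs_1[simp]: "cmat_smult 1 A = A"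
  by (simp add: cmat_smult_def vec_eq_iff)
lemma cs_0[simp]: "cmat_smult 0 A = 0" "cmat_smult a 0 = 0"
  by (simp_all add: cmat_smult_def vec_eq_iff)
lemma cs_sum: "cmat_smult a (\<Sum>i\<in>S. f i) = (\<Sum>i\<in>S. cmat_smult a (f i))"
  by (induct S rule: infinite_finite_induct) (simp_all add: cs_add)
lemma cs_scaleR: "r *\<^sub>R (A::'n::finite op) = cmat_smult (complex_of_real r) A"
  unfolding cmat_smult_def vec_eq_iff by (auto simp: scaleR_conv_of_real[symmetric])
lemma cs_minus: "- (A::'n::finite op) = cmat_smult (-1) A"
  by (simp add: cmat_smult_def vec_eq_iff)

lemma mm_add_left: "(A + B) ** (C::'n::finite op) = A ** C + B ** C"
  by (simp add: matrix_matrix_mult_def vec_eq_iff algebra_simps sum.distrib)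
lemma mm_sum_left: "(\<Sum>i\<in>S. f i) ** (B::'n::finite op) = (\<Sum>i\<in>S. f i ** B)"
  by (induct S rule: infinite_finite_induct) (simp_all add: mm_add_left)
lemma mm_sum_right: "(B::'n::finite op) ** (\<Sum>i\<in>S. f i) = (\<Sum>i\<in>S. B ** f i)"
  by (induct S rule: infinite_finite_induct) (simp_all add: matrix_add_ldistrib)
lemma mm_diff_left: "(A - B) ** (C::'n::finite op) = A ** C - B ** C"
  by (simp add: matrix_matrix_mult_def vec_eq_iff algebra_simps sum_subtractf)
lemma mm_diff_right: "(C::'n::finite op) ** (A - B) = C ** A - C ** B"
  by (simp add: matrix_matrix_mult_def vec_eq_iff algebra_simps sum_subtractf)

lemma adj_adj[simp]: "adjoint (adjoint A) = A"
  by (simp add: adjoint_def vec_eq_iff)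
lemma adj_mult: "adjoint (A ** B) = adjoint B ** adjoint A"
  by (simp add: adjoint_def matrix_matrix_mult_def vec_eq_iff mult.commute)
lemma adj_add: "adjoint (A + B) = adjoint A + adjoint B"
  by (simp add: adjoint_def vec_eq_iff)
lemma adj_diff: "adjoint (A - B) = adjoint A - adjoint B"
  by (simp add: adjoint_def vec_eq_iff)
lemma adj_cs: "adjoint (cmat_smult a A) = cmat_smult (cnj a) (adjoint A)"
  by (simp add: adjoint_def cmat_smult_def vec_eq_iff)
lemma adj_0[simp]: "adjoint 0 = 0"
  by (simp add: adjoint_def vec_eq_iff)
lemma adj_mat1[simp]: "adjoint (mat 1) = mat 1"
  by (simp add: adjoint_def vec_eq_iff mat_def)
lemma adj_sum: "adjoint (\<Sum>i\<in>S. f i) = (\<Sum>i\<in>S. adjoint (f i))"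
  by (induct S rule: infinite_finite_induct) (simp_all add: adj_add)

lemma kron_mult: "kron A B ** kron C D = kron (A ** C) (B ** D)"
  by (simp add: kron_def matrix_matrix_mult_def vec_eq_iff sum_product
        UNIV_Times_UNIV[symmetric] sum.cartesian_product mult_ac case_prod_unfold del: UNIV_Times_UNIV)
lemma kron_add_left: "kron (A + B) C = kron A C + kron B C"
  by (simp add: kron_def vec_eq_iff algebra_simps)
lemma kron_add_right: "kron C (A + B) = kron C A + kron C B"
  by (simp add: kron_def vec_eq_iff algebra_simps)
lemma kron_diff_left: "kron (A - B) C = kron A C - kron B C"
  by (simp add: kron_def vec_eq_iff algebra_simps)
lemma kron_cs_left: "kron (cmat_smult a A) C = cmat_smult a (kron A C)"
  by (simp add: kron_def cmat_smult_def vec_eq_iff algebra_simps)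
lemma kron_0[simp]: "kron 0 C = 0"
  by (simp add: kron_def vec_eq_iff)
lemma kron_sum_left: "kron (\<Sum>i\<in>S. f i) C = (\<Sum>i\<in>S. kron (f i) C)"
  by (induct S rule: infinite_finite_induct) (simp_all add: kron_add_left)
lemma kron_mat1: "kron (mat 1) (mat 1) = mat 1"
  by (auto simp add: kron_def vec_eq_iff mat_def prod_eq_iff)
lemma adj_kron: "adjoint (kron A B) = kron (adjoint A) (adjoint B)"
  by (simp add: kron_def adjoint_def vec_eq_iff)




lemma norm_entry: "norm ((A::'n::finite op) $ i $ j) \<le> norm A"
  by (rule order_trans[OF Finite_Cartesian_Product.norm_nth_le Finite_Cartesian_Product.norm_nth_le])

lemma norm_vec_le_sum: "norm (x::'a::real_normed_vector^'n) \<le> (\<Sum>i\<in>UNIV. norm (x$i))"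
  unfolding norm_vec_def by (rule L2_set_le_sum) simp

lemma norm_le_entries: "norm (A::'n::finite op) \<le> (\<Sum>i\<in>UNIV. \<Sum>j\<in>UNIV. norm (A$i$j))"
  by (rule order_trans[OF norm_vec_le_sum]) (intro sum_mono norm_vec_le_sum)

lemma norm_le_entries_bound:
  assumes "\<And>i j. norm ((A::'n::finite op)$i$j) \<le> b"
  shows "norm A \<le> real CARD('n)^2 * b"
proof -
  have "norm A \<le> (\<Sum>i\<in>UNIV. \<Sum>j\<in>UNIV. norm (A$i$j))" by (rule norm_le_entries)
  also have "\<dots> \<le> (\<Sum>i\<in>(UNIV::'n set). \<Sum>j\<in>(UNIV::'n set). b)"
    by (intro sum_mono assms)
  finally have "norm A \<le> (\<Sum>i\<in>(UNIV::'n set). \<Sum>j\<in>(UNIV::'n set). b)" .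
  then show ?thesis by (simp add: power2_eq_square)
qed

lemma norm_mm: "norm ((A::'n::finite op) ** (B::'n op)) \<le> real CARD('n)^3 * norm A * norm B"
proof -
  have "norm ((A ** B)$i$j) \<le> real CARD('n) * (norm A * norm B)" for i j
  proof -
    have "norm ((A ** B)$i$j) = norm (\<Sum>k\<in>UNIV. A$i$k * B$k$j)"
      by (simp add: matrix_matrix_mult_def)
    also have "\<dots> \<le> (\<Sum>k\<in>UNIV. norm (A$i$k * B$k$j))" by (rule norm_sum)
    also have "\<dots> \<le> (\<Sum>k\<in>(UNIV::'n set). norm A * norm B)"
      by (intro sum_mono, simp only: norm_mult, rule mult_mono[OF norm_entry norm_entry norm_ge_zero norm_ge_zero])
    finally show ?thesis by simp
  qed
  then have "norm (A ** B) \<le> real CARD('n)^2 * (real CARD('n) * (norm A * norm B))"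
    by (rule norm_le_entries_bound)
  then show ?thesis by (simp add: power_def algebra_simps)
qed

lemma norm_cs: "norm (cmat_smult c (A::'n::finite op)) = cmod c * norm A"
proof -
  have r: "norm ((cmat_smult c A)$i) = cmod c * norm (A$i)" for i
    unfolding norm_vec_def cmat_smult_def
    by (simp add: norm_mult L2_set_right_distrib)
  have "norm (cmat_smult c A) = L2_set (\<lambda>i. cmod c * norm (A$i)) UNIV"
    by (subst norm_vec_def) (simp only: r)
  also have "\<dots> = cmod c * norm A"
    by (simp add: L2_set_right_distrib norm_vec_def)
  finally show ?thesis .
qed

lemma bb_mm: "bounded_bilinear (\<lambda>(A::'n::finite op) (B::'n op). A ** B)"
proof
  fix a a' b b' :: "'n op" and r :: real
  show "(a + a') ** b = a ** b + a' ** b" by (rule mm_add_left)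
  show "a ** (b + b') = a ** b + a ** b'" by (rule matrix_add_ldistrib)
  show "(r *\<^sub>R a) ** b = r *\<^sub>R (a ** b)" by (simp add: cs_scaleR cs_mult_left)
  show "a ** (r *\<^sub>R b) = r *\<^sub>R (a ** b)" by (simp add: cs_scaleR cs_mult_right)
next
  show "\<exists>K. \<forall>(a::'n op) (b::'n op). norm (a ** b) \<le> norm a * norm b * K"
  proof (rule exI[of _ "real CARD('n)^3"], intro allI)
    fix a b :: "'n op"
    show "norm (a ** b) \<le> norm a * norm b * real CARD('n)^3"
      using norm_mm[of a b] by (simp add: ac_simps)
  qed
qed

lemma bb_cs: "bounded_bilinear (\<lambda>(z::complex) (A::'n::finite op). cmat_smult z A)"
proof
  fix a a' :: complex and b b' :: "'n op" and r :: real
  show "cmat_smult (a + a') b = cmat_smult a b + cmat_smult a' b" by (rule cs_add_scalar)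
  show "cmat_smult a (b + b') = cmat_smult a b + cmat_smult a b'" by (rule cs_add)
  show "cmat_smult (r *\<^sub>R a) b = r *\<^sub>R cmat_smult a b" by (simp add: cs_scaleR cs_cs scaleR_conv_of_real)
  show "cmat_smult a (r *\<^sub>R b) = r *\<^sub>R cmat_smult a b" by (simp add: cs_scaleR cs_cs mult.commute)
next
  show "\<exists>K. \<forall>(a::complex) (b::'n op). norm (cmat_smult a b) \<le> norm a * norm b * K"
    by (rule exI[of _ 1]) (simp add: norm_cs)
qed

lemma bl_adj: "bounded_linear (adjoint :: 'n::finite op \<Rightarrow> 'n op)"
proof
  fix a b :: "'n op" and r :: real
  show "adjoint (a + b) = adjoint a + adjoint b" by (rule adj_add)
  show "adjoint (r *\<^sub>R a) = r *\<^sub>R adjoint a" by (simp add: cs_scaleR adj_cs)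
  show "\<exists>K. \<forall>x::'n op. norm (adjoint x) \<le> norm x * K"
  proof (intro exI allI)
    fix x :: "'n op"
    have "norm ((adjoint x)$i$j) \<le> norm x" for i j
      by (simp add: adjoint_def norm_entry)
    then show "norm (adjoint x) \<le> norm x * real CARD('n)^2"
      using norm_le_entries_bound by (metis mult.commute)
  qed
qed

lemma bl_kron: "bounded_linear (\<lambda>A::'s::finite op. kron A (mat 1 :: 'b::finite op))"
proof
  fix a b :: "'s op" and r :: real
  show "kron (a + b) (mat 1 :: 'b op) = kron a (mat 1) + kron b (mat 1)" by (rule kron_add_left)
  show "kron (r *\<^sub>R a) (mat 1 :: 'b op) = r *\<^sub>R kron a (mat 1)" by (simp add: cs_scaleR kron_cs_left)
  show "\<exists>K. \<forall>x::'s op. norm (kron x (mat 1 :: 'b op)) \<le> norm x * K"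
  proof (intro exI allI)
    fix x :: "'s op"
    have "norm ((kron x (mat 1 :: 'b op))$i$j) \<le> norm x" for i j
      by (auto simp add: kron_def mat_def norm_entry)
    then show "norm (kron x (mat 1 :: 'b op)) \<le> norm x * real CARD('s \<times> 'b)^2"
      using norm_le_entries_bound by (metis mult.commute)
  qed
qed

lemma unitary_entry:
  assumes "unitary (U::'n::finite op)"
  shows "norm (U$i$j) \<le> 1"
proof -
  have "(adjoint U ** U)$j$j = 1" using assms by (simp add: unitary_def mat_def)
  then have "(\<Sum>k\<in>UNIV. U$k$j * cnj (U$k$j)) = 1"
    unfolding adjoint_def matrix_matrix_mult_def by (simp add: mult.commute)
  moreover have "(\<Sum>k\<in>UNIV. U$k$j * cnj (U$k$j)) = of_real (\<Sum>k\<in>UNIV. (cmod (U$k$j))^2)"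
    by (simp add: complex_norm_square[symmetric])
  ultimately have "(\<Sum>k\<in>UNIV. (cmod (U$k$j))^2) = 1"
    by (metis of_real_eq_1_iff)
  then have "(cmod (U$i$j))^2 \<le> 1"
    by (metis UNIV_I finite_class.finite_UNIV member_le_sum zero_le_power2)
  then show ?thesis by (simp add: power_le_one_iff abs_le_square_iff)
qed

lemma unitary_norm: "unitary (U::'n::finite op) \<Longrightarrow> norm U \<le> real CARD('n)^2"
  using norm_le_entries_bound[of U 1] unitary_entry by fastforce




lemma d_mm:
  assumes "(f has_vector_derivative f') (at x within s)" "(g has_vector_derivative g') (at x within s)"
  shows "((\<lambda>x. (f x::'n::finite op) ** (g x::'n op)) has_vector_derivative (f x ** g' + f' ** g x)) (at x within s)"
  by (rule bounded_bilinear.has_vector_derivative[OF bb_mm assms])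

lemma d_adj:
  assumes "(f has_vector_derivative f') F"
  shows "((\<lambda>x. adjoint (f x::'n::finite op)) has_vector_derivative adjoint f') F"
  by (rule bounded_linear.has_vector_derivative[OF bl_adj assms])

lemma d_kron:
  assumes "(f has_vector_derivative f') F"
  shows "((\<lambda>x. kron (f x::'s::finite op) (mat 1::'b::finite op)) has_vector_derivative kron f' (mat 1)) F"
  by (rule bounded_linear.has_vector_derivative[OF bl_kron assms])

lemma d_cs:
  assumes "(a has_vector_derivative a') (at x within s)" "(f has_vector_derivative f') (at x within s)"
  shows "((\<lambda>x. cmat_smult (a x) (f x::'n::finite op)) has_vector_derivative
           (cmat_smult (a x) f' + cmat_smult a' (f x))) (at x within s)"
  by (rule bounded_bilinear.has_vector_derivative[OF bb_cs assms])

lemma d_cs_const: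
  assumes "(f has_vector_derivative f') (at x within s)"
  shows "((\<lambda>x. cmat_smult c (f x::'n::finite op)) has_vector_derivative cmat_smult c f') (at x within s)"
  using d_cs[OF has_vector_derivative_const assms, of c] by simp

lemma d_exp:
  "((\<lambda>t. exp (\<i> * complex_of_real (w*t))) has_vector_derivative
      (\<i> * complex_of_real w * exp (\<i> * complex_of_real (w*t)))) (at t within s)"
proof -
  have "((\<lambda>z. exp (\<i> * complex_of_real w * z)) has_field_derivative
        (exp (\<i> * complex_of_real w * of_real t) * (\<i> * complex_of_real w))) (at (of_real t))"
    by (auto intro!: derivative_eq_intros)
  from has_vector_derivative_real_field[OF this, where s=s] show ?thesis
    by (simp add: ac_simps)
qed

lemma ev_deriv: "evolution T H U \<Longrightarrow> t \<in> {0..T} \<Longrightarrow>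
   (U has_vector_derivative cmat_smult (- \<i>) (H t ** U t)) (at t within {0..T})"
  by (simp add: evolution_def)

lemma const_on_interval:
  assumes "\<And>t. t \<in> {0..T} \<Longrightarrow> (f has_vector_derivative 0) (at t within {0..T})"
    and "t \<in> {0..T}"
  shows "f t = f 0"
proof -
  obtain C where "\<And>x. x \<in> {0..T} \<Longrightarrow> f x = C"
    using has_vector_derivative_zero_constant[of "{0..T}" f] assms(1) by blast
  moreover have "0 \<in> {0..T}" using assms(2) by simp
  ultimately show ?thesis using assms(2) by metis
qed

lemma herm_adj: "hermitian H \<Longrightarrow> adjoint H = H" by (simp add: hermitian_def)

lemma ev_unitary:
  fixes U H :: "real \<Rightarrow> 'n::finite op"
  assumes ev: "evolution T H U" and herm: "\<forall>t\<in>{0..T}. hermitian (H t)" and t: "t \<in> {0..T}"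
  shows "unitary (U t)"
proof -
  have d: "((\<lambda>s. adjoint (U s) ** U s) has_vector_derivative 0) (at s within {0..T})"
    if s: "s \<in> {0..T}" for s
  proof -
    have "((\<lambda>s. adjoint (U s) ** U s) has_vector_derivative
          (adjoint (U s) ** cmat_smult (- \<i>) (H s ** U s) + adjoint (cmat_smult (- \<i>) (H s ** U s)) ** U s))
          (at s within {0..T})"
      by (intro d_mm d_adj ev_deriv[OF ev s])
    moreover have "adjoint (U s) ** cmat_smult (- \<i>) (H s ** U s) + adjoint (cmat_smult (- \<i>) (H s ** U s)) ** U s = 0"
      using herm s by (simp add: adj_cs adj_mult herm_adj cs_mult_left cs_mult_right matrix_mul_assoc
            cs_add_scalar[symmetric])
    ultimately show ?thesis by simp
  qed
  have "adjoint (U t) ** U t = mat 1"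
    using const_on_interval[of T "\<lambda>s. adjoint (U s) ** U s", OF d t] ev by (simp add: evolution_def)
  then show ?thesis unfolding unitary_def using matrix_left_right_inverse by blast
qed

lemma ev_commute:
  fixes U H :: "real \<Rightarrow> 'n::finite op"
  assumes ev: "evolution T H U" and herm: "\<forall>t\<in>{0..T}. hermitian (H t)"
    and comm: "\<forall>t\<in>{0..T}. X ** H t = H t ** X" and t: "t \<in> {0..T}"
  shows "X ** U t = U t ** X"
proof -
  have d: "((\<lambda>s. (adjoint (U s) ** X) ** U s) has_vector_derivative 0) (at s within {0..T})"
    if s: "s \<in> {0..T}" for s
  proof -
    have "((\<lambda>s. (adjoint (U s) ** X) ** U s) has_vector_derivative
          ((adjoint (U s) ** X) ** cmat_smult (- \<i>) (H s ** U s) + (adjoint (U s) ** 0 + adjoint (cmat_smult (- \<i>) (H s ** U s)) ** X) ** U s))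
          (at s within {0..T})"
      by (intro d_mm d_adj ev_deriv[OF ev s] has_vector_derivative_const)
    moreover have "(adjoint (U s) ** X) ** cmat_smult (- \<i>) (H s ** U s) + (adjoint (U s) ** 0 + adjoint (cmat_smult (- \<i>) (H s ** U s)) ** X) ** U s = 0"
    proof -
      have "X ** H s = H s ** X" using comm s by blast
      then have e: "adjoint (U s) ** X ** H s ** U s = adjoint (U s) ** H s ** X ** U s"
        by (metis matrix_mul_assoc)
      show ?thesis
        using herm s
        by (simp add: adj_cs adj_mult herm_adj cs_mult_left cs_mult_right matrix_mul_assoc e
            cs_add_scalar[symmetric])
    qed
    ultimately show ?thesis by simp
  qed
  have u: "unitary (U t)" by (rule ev_unitary[OF ev herm t])
  have "(adjoint (U t) ** X) ** U t = X"
    using const_on_interval[of T "\<lambda>s. (adjoint (U s) ** X) ** U s", OF d t] ev by (simp add: evolution_def)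
  then have "U t ** ((adjoint (U t) ** X) ** U t) = U t ** X" by simp
  then show ?thesis using u by (simp add: matrix_mul_assoc unitary_def)
qed

lemma ev_eigen:
  fixes U H :: "real \<Rightarrow> 'n::finite op"
  assumes ev: "evolution T H U"
    and eig: "\<forall>t\<in>{0..T}. X ** H t = cmat_smult (complex_of_real mu) X" and t: "t \<in> {0..T}"
  shows "X ** U t = cmat_smult (exp (- \<i> * complex_of_real (mu * t))) X"
proof -
  let ?e = "\<lambda>s. exp (\<i> * complex_of_real (mu * s))"
  have d: "((\<lambda>s. cmat_smult (?e s) (X ** U s)) has_vector_derivative 0) (at s within {0..T})"
    if s: "s \<in> {0..T}" for s
  proof -
    have "((\<lambda>s. cmat_smult (?e s) (X ** U s)) has_vector_derivative
          (cmat_smult (?e s) (X ** cmat_smult (- \<i>) (H s ** U s) + 0 ** U s) + cmat_smult (\<i> * complex_of_real mu * ?e s) (X ** U s)))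
          (at s within {0..T})"
      by (intro d_cs d_mm d_exp ev_deriv[OF ev s] has_vector_derivative_const)
    moreover have "cmat_smult (?e s) (X ** cmat_smult (- \<i>) (H s ** U s) + 0 ** U s) + cmat_smult (\<i> * complex_of_real mu * ?e s) (X ** U s) = 0"
    proof -
      have "X ** (H s ** U s) = cmat_smult (complex_of_real mu) (X ** U s)"
        using eig s by (simp add: matrix_mul_assoc cs_mult_left)
      then show ?thesis
        by (simp add: cs_mult_right cs_cs cs_add_scalar[symmetric] algebra_simps)
    qed
    ultimately show ?thesis by simp
  qed
  have "cmat_smult (?e t) (X ** U t) = X"
    using const_on_interval[of T "\<lambda>s. cmat_smult (?e s) (X ** U s)", OF d t] ev by (simp add: evolution_def)
  then have "cmat_smult (exp (- \<i> * complex_of_real (mu * t))) (cmat_smult (?e t) (X ** U t))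
       = cmat_smult (exp (- \<i> * complex_of_real (mu * t))) X" by simp
  then show ?thesis by (simp add: cs_cs exp_add[symmetric])
qed




section \<open>Spectral facts\<close>

context
  fixes Hp :: "'n::finite op" and Lam :: "real set" and Proj :: "real \<Rightarrow> 'n op"
  assumes sp: "spectral_decomp Hp Lam Proj"
begin

lemma sp_fin: "finite Lam" using sp by (simp add: spectral_decomp_def)
lemma sp_idem: "a \<in> Lam \<Longrightarrow> Proj a ** Proj a = Proj a"
  using sp by (simp add: spectral_decomp_def orth_proj_def)
lemma sp_herm: "a \<in> Lam \<Longrightarrow> hermitian (Proj a)"
  using sp by (simp add: spectral_decomp_def orth_proj_def)
lemma sp_orth: "a \<in> Lam \<Longrightarrow> b \<in> Lam \<Longrightarrow> a \<noteq> b \<Longrightarrow> Proj a ** Proj b = 0"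
  using sp by (simp add: spectral_decomp_def)
lemma sp_sum: "(\<Sum>a\<in>Lam. Proj a) = mat 1"
  using sp by (simp add: spectral_decomp_def)
lemma sp_H: "Hp = (\<Sum>a\<in>Lam. cmat_smult (complex_of_real a) (Proj a))"
  using sp by (simp add: spectral_decomp_def)

lemma sp_eig_left: "a \<in> Lam \<Longrightarrow> Proj a ** Hp = cmat_smult (complex_of_real a) (Proj a)"
proof -
  assume a: "a \<in> Lam"
  have "Proj a ** Hp = (\<Sum>b\<in>Lam. cmat_smult (complex_of_real b) (Proj a ** Proj b))"
    by (simp add: sp_H mm_sum_right cs_mult_right)
  also have "\<dots> = (\<Sum>b\<in>Lam. if b = a then cmat_smult (complex_of_real a) (Proj a) else 0)"
    by (rule sum.cong) (auto simp: sp_idem sp_orth a)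
  also have "\<dots> = cmat_smult (complex_of_real a) (Proj a)"
    using a sp_fin by simp
  finally show ?thesis .
qed

lemma sp_eig_right: "a \<in> Lam \<Longrightarrow> Hp ** Proj a = cmat_smult (complex_of_real a) (Proj a)"
proof -
  assume a: "a \<in> Lam"
  have "Hp ** Proj a = (\<Sum>b\<in>Lam. cmat_smult (complex_of_real b) (Proj b ** Proj a))"
    by (simp add: sp_H mm_sum_left cs_mult_left)
  also have "\<dots> = (\<Sum>b\<in>Lam. if b = a then cmat_smult (complex_of_real a) (Proj a) else 0)"
    by (rule sum.cong) (auto simp: sp_idem sp_orth a)
  also have "\<dots> = cmat_smult (complex_of_real a) (Proj a)"
    using a sp_fin by simp
  finally show ?thesis .
qed

lemma sp_offdiag:
  assumes c: "A ** Hp = Hp ** A" and a: "a \<in> Lam" and b: "b \<in> Lam" and ab: "a \<noteq> b"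
  shows "Proj b ** A ** Proj a = 0"
proof -
  have "Proj b ** A ** Hp ** Proj a = Proj b ** Hp ** A ** Proj a"
    using c by (metis matrix_mul_assoc)
  then have "cmat_smult (complex_of_real a) (Proj b ** A ** Proj a) = cmat_smult (complex_of_real b) (Proj b ** A ** Proj a)"
    by (simp add: matrix_mul_assoc[symmetric] sp_eig_right[OF a] sp_eig_left[OF b] cs_mult_left cs_mult_right)
  then have "cmat_smult (complex_of_real (a - b)) (Proj b ** A ** Proj a) = 0"
    by (simp add: cs_diff[symmetric] cmat_smult_def vec_eq_iff algebra_simps)
  then show ?thesis using ab
    by (auto simp: cmat_smult_def vec_eq_iff)
qed

lemma sp_commute:
  assumes c: "A ** Hp = Hp ** A" and a: "a \<in> Lam"
  shows "A ** Proj a = Proj a ** A"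
proof -
  have "A ** Proj a = (\<Sum>b\<in>Lam. Proj b) ** A ** Proj a" by (simp add: sp_sum)
  also have "\<dots> = (\<Sum>b\<in>Lam. Proj b ** A ** Proj a)" by (simp add: mm_sum_left)
  also have "\<dots> = (\<Sum>b\<in>Lam. if b = a then Proj a ** A ** Proj a else 0)"
    by (rule sum.cong) (auto simp: sp_offdiag[OF c a])
  also have "\<dots> = Proj a ** A ** Proj a" using a sp_fin by simp
  finally have 1: "A ** Proj a = Proj a ** A ** Proj a" .
  have "Proj a ** A = Proj a ** A ** (\<Sum>b\<in>Lam. Proj b)" by (simp add: sp_sum)
  also have "\<dots> = (\<Sum>b\<in>Lam. Proj a ** A ** Proj b)" by (simp add: mm_sum_right)
  also have "\<dots> = (\<Sum>b\<in>Lam. if b = a then Proj a ** A ** Proj a else 0)"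
    by (rule sum.cong) (auto simp: sp_offdiag[OF c _ a])
  also have "\<dots> = Proj a ** A ** Proj a" using a sp_fin by simp
  finally show ?thesis using 1 by simp
qed

end

lemma cs_m1[simp]: "cmat_smult (-1) A = - A"
  by (simp add: cmat_smult_def vec_eq_iff)

section \<open>Mean value bound\<close>

lemma mvt_vec:
  fixes f :: "real \<Rightarrow> 'a::real_normed_vector"
  assumes d: "\<forall>t\<in>{0..T}. (f has_vector_derivative f' t) (at t within {0..T})"
    and b: "\<forall>t\<in>{0..T}. norm (f' t) \<le> B" and T: "0 \<le> T"
  shows "norm (f T - f 0) \<le> B * T"
proof -
  have B: "0 \<le> B" using b T by (meson atLeastAtMost_iff norm_ge_zero order_trans order_refl)
  have "norm (f T - f 0) \<le> B * norm (T - 0)"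
  proof (rule differentiable_bound[of "{0..T}" f "\<lambda>t h. h *\<^sub>R f' t" B])
    show "convex {0..T}" by simp
    show "\<And>x. x \<in> {0..T} \<Longrightarrow> (f has_derivative (\<lambda>h. h *\<^sub>R f' x)) (at x within {0..T})"
      using d by (simp add: has_vector_derivative_def)
    show "\<And>x. x \<in> {0..T} \<Longrightarrow> onorm (\<lambda>h. h *\<^sub>R f' x) \<le> B"
      by (rule onorm_bound[OF B]) (use b in \<open>auto simp: mult.commute[of B] intro!: mult_left_mono\<close>)
  qed (use T in auto)
  then show ?thesis using T by simp
qed




lemma norm_mm_le:
  assumes "norm (A::'n::finite op) \<le> x" "norm (B::'n op) \<le> y"
  shows "norm (A ** B) \<le> real CARD('n)^3 * x * y"
proof -
  have "real CARD('n)^3 * norm A \<le> real CARD('n)^3 * x" using assms by (simp add: mult_left_mono)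
  then have "real CARD('n)^3 * norm A * norm B \<le> real CARD('n)^3 * x * y"
  proof -
    have "0 \<le> x" using assms(1) norm_ge_zero[of A] by linarith
    then have "0 \<le> real CARD('n)^3 * x" by simp
    then show ?thesis using assms \<open>real CARD('n)^3 * norm A \<le> real CARD('n)^3 * x\<close>
      by (intro mult_mono) auto
  qed
  then show ?thesis using norm_mm[of A B] by linarith
qed

lemma core:
  fixes Psi Vt F Off R :: "real \<Rightarrow> 'n::finite op" and PP :: "'n op"
  assumes T: "0 \<le> T"
    and dPsi: "\<forall>t\<in>{0..T}. (Psi has_vector_derivative cmat_smult \<i> (Psi t ** Vt t)) (at t within {0..T})"
    and dF: "\<forall>t\<in>{0..T}. (F has_vector_derivative (Off t + R t)) (at t within {0..T})"
    and VO: "\<forall>t\<in>{0..T}. Vt t ** PP = Off t ** PP"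
    and Psi0: "Psi 0 = mat 1"
    and bds: "\<forall>t\<in>{0..T}. norm (Psi t) \<le> a \<and> norm (Vt t) \<le> v \<and> norm (F t) \<le> f \<and> norm (R t) \<le> r"
  shows "norm (Psi T ** PP - PP) \<le>
    T * (real CARD('n)^3 * (real CARD('n)^3 * (real CARD('n)^3 * a * v) * f) * norm PP
         + real CARD('n)^3 * (real CARD('n)^3 * a * r) * norm PP)
      + real CARD('n)^3 * (real CARD('n)^3 * a * f) * norm PP + real CARD('n)^3 * f * norm PP"
proof -
  define k where "k = real CARD('n)^3"
  define Y where "Y t = Psi t ** PP - cmat_smult \<i> ((Psi t ** F t) ** PP)" for t
  define Y' where "Y' t = (Psi t ** Vt t) ** F t ** PP - cmat_smult \<i> (Psi t ** R t ** PP)" for t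
  have dY: "\<forall>t\<in>{0..T}. (Y has_vector_derivative Y' t) (at t within {0..T})"
  proof
    fix t assume t: "t \<in> {0..T}"
    have "(Y has_vector_derivative
        (Psi t ** 0 + cmat_smult \<i> (Psi t ** Vt t) ** PP)
        - cmat_smult \<i> ((Psi t ** F t) ** 0 + (Psi t ** (Off t + R t) + cmat_smult \<i> (Psi t ** Vt t) ** F t) ** PP))
        (at t within {0..T})"
      unfolding Y_def
      by (intro has_vector_derivative_diff d_mm d_cs_const has_vector_derivative_const
          dPsi[rule_format, OF t] dF[rule_format, OF t])
    moreover have "Psi t ** 0 + cmat_smult \<i> (Psi t ** Vt t) ** PP
        - cmat_smult \<i> ((Psi t ** F t) ** 0 + (Psi t ** (Off t + R t) + cmat_smult \<i> (Psi t ** Vt t) ** F t) ** PP)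
        = Y' t"
    proof -
      have "Psi t ** Vt t ** PP = Psi t ** Off t ** PP"
        using VO t by (metis matrix_mul_assoc)
      then show ?thesis
        unfolding Y'_def
        by (simp add: cs_mult_left cs_mult_right matrix_add_ldistrib mm_add_left cs_add cs_cs matrix_mul_assoc)
    qed
    ultimately show "(Y has_vector_derivative Y' t) (at t within {0..T})" by simp
  qed
  have bY': "\<forall>t\<in>{0..T}. norm (Y' t) \<le> k * (k * (k * a * v) * f) * norm PP + k * (k * a * r) * norm PP"
  proof
    fix t assume t: "t \<in> {0..T}"
    have b: "norm (Psi t) \<le> a" "norm (Vt t) \<le> v" "norm (F t) \<le> f" "norm (R t) \<le> r"
      using bds t by auto
    have 1: "norm ((Psi t ** Vt t) ** F t ** PP) \<le> k * (k * (k * a * v) * f) * norm PP"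
      unfolding k_def by (intro norm_mm_le b order_refl)
    have 2: "norm (cmat_smult \<i> (Psi t ** R t ** PP)) \<le> k * (k * a * r) * norm PP"
      unfolding k_def norm_cs by (simp, intro norm_mm_le b order_refl)
    show "norm (Y' t) \<le> k * (k * (k * a * v) * f) * norm PP + k * (k * a * r) * norm PP"
      unfolding Y'_def using 1 2 norm_triangle_ineq4[of "(Psi t ** Vt t) ** F t ** PP" "cmat_smult \<i> (Psi t ** R t ** PP)"]
      by linarith
  qed
  have mv: "norm (Y T - Y 0) \<le> (k * (k * (k * a * v) * f) * norm PP + k * (k * a * r) * norm PP) * T"
    by (rule mvt_vec[OF dY bY' T])
  have eq: "Psi T ** PP - PP = (Y T - Y 0) + cmat_smult \<i> ((Psi T ** F T) ** PP) - cmat_smult \<i> (F 0 ** PP)"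
    unfolding Y_def by (simp add: Psi0)
  have TT: "T \<in> {0..T}" "0 \<in> {0..T}" using T by auto
  have n1: "norm (cmat_smult \<i> ((Psi T ** F T) ** PP)) \<le> k * (k * a * f) * norm PP"
    unfolding k_def norm_cs by (simp, intro norm_mm_le order_refl) (use bds TT in auto)
  have n2: "norm (cmat_smult \<i> (F 0 ** PP)) \<le> k * f * norm PP"
    unfolding k_def norm_cs by (simp, intro norm_mm_le order_refl) (use bds TT in auto)
  have "norm (Psi T ** PP - PP) \<le> norm (Y T - Y 0) + norm (cmat_smult \<i> ((Psi T ** F T) ** PP)) + norm (cmat_smult \<i> (F 0 ** PP))"
    unfolding eq by (rule order_trans[OF norm_triangle_ineq4]) (simp add: norm_triangle_ineq)
  then show ?thesis using mv n1 n2 unfolding k_def by (simp add: algebra_simps)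
qed




definition Emat :: "'n::finite \<Rightarrow> 'n \<Rightarrow> 'n op" where
  "Emat i j = (\<chi> k l. if k = i \<and> l = j then 1 else 0)"

lemma mat_expand: "(A::'n::finite op) = (\<Sum>i\<in>UNIV. \<Sum>j\<in>UNIV. cmat_smult (A$i$j) (Emat i j))"
proof -
  have "(\<Sum>i\<in>UNIV. \<Sum>j\<in>UNIV. cmat_smult (A$i$j) (Emat i j)) $ p $ q = A $ p $ q" for p q
  proof -
    have e: "A $ x $ y * (if p = x \<and> q = y then 1 else 0) = (if y = q then (if x = p then A$p$q else 0) else 0)" for x y
      by auto
    show ?thesis
      by (simp add: sum_component cmat_smult_def Emat_def e sum.delta)
  qed
  then show ?thesis by (simp add: vec_eq_iff)
qed

lemma uin_0: "unitarily_invariant_norm N \<Longrightarrow> N 0 = 0"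
  unfolding unitarily_invariant_norm_def by blast
lemma uin_tri: "unitarily_invariant_norm N \<Longrightarrow> N (X + Y) \<le> N X + N Y"
  unfolding unitarily_invariant_norm_def by blast
lemma uin_cs: "unitarily_invariant_norm N \<Longrightarrow> N (cmat_smult c X) = cmod c * N X"
  unfolding unitarily_invariant_norm_def by blast

lemma uin_sum:
  assumes N: "unitarily_invariant_norm N"
  shows "N (\<Sum>i\<in>S. f i) \<le> (\<Sum>i\<in>S. N (f i))"
proof (induct S rule: infinite_finite_induct)
  case (infinite A) then show ?case using uin_0[OF N] by simp
next
  case empty then show ?case using uin_0[OF N] by simp
next
  case (insert x F)
  then show ?case using uin_tri[OF N, of "f x" "sum f F"] by simp
qed

lemma uin_bound:
  assumes N: "unitarily_invariant_norm N"
  shows "N X \<le> (\<Sum>i\<in>UNIV. \<Sum>j\<in>UNIV. N (Emat i j)) * norm (X::'n::finite op)"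
proof -
  have N0: "0 \<le> N A" for A
  proof -
    have "N (A + (- A)) \<le> N A + N (- A)" by (rule uin_tri[OF N])
    moreover have "N (- A) = N A"
      using uin_cs[OF N, of "-1" A] by simp
    moreover have "N 0 = 0" by (rule uin_0[OF N])
    ultimately show ?thesis by simp
  qed
  have "N X \<le> (\<Sum>i\<in>UNIV. N (\<Sum>j\<in>UNIV. cmat_smult (X$i$j) (Emat i j)))"
    by (subst mat_expand) (rule uin_sum[OF N])
  also have "\<dots> \<le> (\<Sum>i\<in>UNIV. \<Sum>j\<in>UNIV. N (cmat_smult (X$i$j) (Emat i j)))"
    by (intro sum_mono uin_sum[OF N])
  also have "\<dots> \<le> (\<Sum>i\<in>UNIV. \<Sum>j\<in>UNIV. norm X * N (Emat i j))"
    by (intro sum_mono) (simp add: uin_cs[OF N] mult_right_mono norm_entry N0)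
  also have "\<dots> = (\<Sum>i\<in>UNIV. \<Sum>j\<in>UNIV. N (Emat i j)) * norm X"
    by (simp add: sum_distrib_left sum_distrib_right mult.commute)
  finally show ?thesis .
qed

lemma uin_unitary_left:
  assumes N: "unitarily_invariant_norm N" and U: "unitary U"
  shows "N (U ** X) = N X"
proof -
  have "unitary (mat 1 :: 'n::finite op)" by (simp add: unitary_def)
  then show ?thesis using N U unfolding unitarily_invariant_norm_def by (metis matrix_mul_rid)
qed

lemma herm_kron: "hermitian A \<Longrightarrow> hermitian B \<Longrightarrow> hermitian (kron A B)"
  by (simp add: hermitian_def adj_kron)
lemma herm_add: "hermitian A \<Longrightarrow> hermitian B \<Longrightarrow> hermitian (A + B)"
  by (simp add: hermitian_def adj_add)
lemma herm_mat1: "hermitian (mat 1)" by (simp add: hermitian_def)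
lemma herm_cs_real: "hermitian A \<Longrightarrow> hermitian (cmat_smult (complex_of_real r) A)"
  by (simp add: hermitian_def adj_cs)

lemma unitary_adj: "unitary U \<Longrightarrow> unitary (adjoint U)"
  by (simp add: unitary_def)
lemma unitary_kron: "unitary U \<Longrightarrow> unitary (kron U (mat 1))"
  by (simp add: unitary_def adj_kron kron_mult kron_mat1)

lemma comm_kron:
  assumes "X ** A = A ** X"
  shows "kron X (mat 1) ** (kron A (mat 1) + kron (mat 1) B) = (kron A (mat 1) + kron (mat 1) B) ** kron X (mat 1)"
  using assms by (simp add: matrix_add_ldistrib mm_add_left kron_mult)

lemma unitary_comm_adj:
  assumes "unitary U" "X ** U = U ** X"
  shows "X ** adjoint U = adjoint U ** X"
proof -
  have u: "adjoint U ** U = mat 1" "U ** adjoint U = mat 1" using assms(1) by (auto simp: unitary_def)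
  have "adjoint U ** X = (adjoint U ** X) ** (U ** adjoint U)" using u by simp
  also have "\<dots> = adjoint U ** (X ** U) ** adjoint U" by (simp add: matrix_mul_assoc)
  also have "\<dots> = adjoint U ** (U ** X) ** adjoint U" using assms(2) by simp
  also have "\<dots> = (adjoint U ** U) ** X ** adjoint U" by (simp add: matrix_mul_assoc)
  also have "\<dots> = X ** adjoint U" using u by simp
  finally show ?thesis by simp
qed

lemma exp_cnj_mult: "cnj (exp (- \<i> * complex_of_real x)) * exp (- \<i> * complex_of_real x) = 1"
  by (simp add: exp_cnj exp_add[symmetric])




lemma cs_neg: "cmat_smult (- a) X = - cmat_smult a X"
  by (simp add: cmat_smult_def vec_eq_iff)
lemma mm_neg_right: "(A::'n::finite op) ** (- B) = - (A ** B)"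
  by (simp add: matrix_matrix_mult_def vec_eq_iff sum_negf)
lemma mm_neg_left: "(- A) ** (B::'n::finite op) = - (A ** B)"
  by (simp add: matrix_matrix_mult_def vec_eq_iff sum_negf)
lemma adj_neg: "adjoint (- A) = - adjoint A"
  by (simp add: adjoint_def vec_eq_iff)
lemma sandwich_comm:
  fixes X Y U M :: "'n::finite op"
  assumes "X ** U = U ** X" "Y ** U = U ** Y" "X ** adjoint U = adjoint U ** X"
  shows "X ** (adjoint U ** M ** U) ** X ** Y = adjoint U ** (X ** M ** X ** Y) ** U"
proof -
  have "X ** (adjoint U ** M ** U) ** X ** Y = (X ** adjoint U) ** M ** (U ** X) ** Y" by (simp add: matrix_mul_assoc)
  also have "\<dots> = (adjoint U ** X) ** M ** (X ** U) ** Y" using assms by simp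
  also have "\<dots> = adjoint U ** X ** M ** X ** (U ** Y)" by (simp add: matrix_mul_assoc)
  also have "\<dots> = adjoint U ** X ** M ** X ** (Y ** U)" using assms by simp
  also have "\<dots> = adjoint U ** (X ** M ** X ** Y) ** U" by (simp add: matrix_mul_assoc)
  finally show ?thesis .
qed

lemma dsum_bound:
  fixes f :: "real \<Rightarrow> real \<Rightarrow> 'n::finite op"
  assumes fin: "finite Lam" and b: "\<And>a b. a \<in> Lam \<Longrightarrow> b \<in> Lam - {a} \<Longrightarrow> norm (f a b) \<le> B" and B: "0 \<le> B"
  shows "norm (\<Sum>a\<in>Lam. \<Sum>b\<in>Lam-{a}. f a b) \<le> real (card Lam) * real (card Lam) * B"
proof -
  have "norm (\<Sum>a\<in>Lam. \<Sum>b\<in>Lam-{a}. f a b) \<le> (\<Sum>a\<in>Lam. norm (\<Sum>b\<in>Lam-{a}. f a b))" by (rule norm_sum)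
  also have "\<dots> \<le> (\<Sum>a\<in>Lam. real (card Lam) * B)"
  proof (rule sum_mono)
    fix a assume a: "a \<in> Lam"
    have "norm (\<Sum>b\<in>Lam-{a}. f a b) \<le> (\<Sum>b\<in>Lam-{a}. norm (f a b))" by (rule norm_sum)
    also have "\<dots> \<le> (\<Sum>b\<in>Lam-{a}. B)" by (rule sum_mono) (rule b[OF a])
    also have "\<dots> = real (card (Lam - {a})) * B" by simp
    also have "\<dots> \<le> real (card Lam) * B"
      by (rule mult_right_mono) (use fin B in \<open>auto intro: card_mono\<close>)
    finally show "norm (\<Sum>b\<in>Lam-{a}. f a b) \<le> real (card Lam) * B" .
  qed
  also have "\<dots> = real (card Lam) * real (card Lam) * B" by simp
  finally show ?thesis .
qed

lemma uin_nonneg: "unitarily_invariant_norm N \<Longrightarrow> 0 \<le> N A"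
proof -
  assume N: "unitarily_invariant_norm N"
  have "N (A + (- A)) \<le> N A + N (- A)" by (rule uin_tri[OF N])
  moreover have "N (- A) = N A" using uin_cs[OF N, of "-1" A] by simp
  moreover have "N 0 = 0" by (rule uin_0[OF N])
  ultimately show ?thesis by simp
qed

lemma kron_mult_I: "kron (A ** B) (mat 1 :: 'b::finite op) = kron A (mat 1) ** kron B (mat 1)"
  by (simp add: kron_mult)

context
  fixes T c :: real
    and HS :: "real \<Rightarrow> 's::finite op" and HB :: "'b::finite op"
    and Hp :: "'s op" and Lam :: "real set" and Proj :: "real \<Rightarrow> 's op"
    and V :: "('s \<times> 'b) op" and P :: "'s op"
    and U0 :: "real \<Rightarrow> ('s \<times> 'b) op"
  assumes T_pos: "T > 0"
    and HS_cont: "continuous_on {0..T} HS"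
    and HS_herm: "\<forall>t\<in>{0..T}. hermitian (HS t)"
    and HB_herm: "hermitian HB"
    and Hp_herm: "hermitian Hp"
    and Hp_spec: "spectral_decomp Hp Lam Proj"
    and V_herm: "hermitian V"
    and P_proj: "orth_proj P"
    and comm_P: "\<forall>t\<in>{0..T}. HS t ** P = P ** HS t"
    and comm_Hp: "\<forall>t\<in>{0..T}. HS t ** Hp = Hp ** HS t"
    and pinch: "(\<Sum>a\<in>Lam. kron (Proj a) (mat 1) ** V ** kron (Proj a) (mat 1)) ** kron P (mat 1)
                 = cmat_smult (complex_of_real c) (kron P (mat 1))"
    and U0_evol: "evolution T (\<lambda>t. kron (HS t) (mat 1) + kron (mat 1) HB) U0"
begin

abbreviation "Kt t \<equiv> kron (HS t) (mat 1) + kron (mat 1) HB"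
abbreviation "PP \<equiv> kron P (mat 1 :: 'b op)"
abbreviation "Pk a \<equiv> kron (Proj a) (mat 1 :: 'b op)"
abbreviation "Vc \<equiv> V - cmat_smult (complex_of_real c) (mat 1)"

lemma T0: "0 \<le> T" using T_pos by simp

lemma Kt_herm: "t \<in> {0..T} \<Longrightarrow> hermitian (Kt t)"
  using HS_herm HB_herm by (simp add: herm_add herm_kron herm_mat1)

lemma U0_unit: "t \<in> {0..T} \<Longrightarrow> unitary (U0 t)"
  by (rule ev_unitary[OF U0_evol]) (use Kt_herm in auto)

lemma U0_comm_gen:
  assumes "\<forall>t\<in>{0..T}. X ** HS t = HS t ** X" and t: "t \<in> {0..T}"
  shows "kron X (mat 1) ** U0 t = U0 t ** kron X (mat 1)"
  by (rule ev_commute[OF U0_evol]) (use Kt_herm assms in \<open>auto intro!: comm_kron\<close>)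

lemma HS_Proj: "t \<in> {0..T} \<Longrightarrow> a \<in> Lam \<Longrightarrow> Proj a ** HS t = HS t ** Proj a"
  using sp_commute[OF Hp_spec, of "HS t" a] comm_Hp by auto

lemma U0_Pk: "t \<in> {0..T} \<Longrightarrow> a \<in> Lam \<Longrightarrow> Pk a ** U0 t = U0 t ** Pk a"
  by (rule U0_comm_gen) (use HS_Proj in auto)
lemma U0_PP: "t \<in> {0..T} \<Longrightarrow> PP ** U0 t = U0 t ** PP"
  by (rule U0_comm_gen) (use comm_P in auto)
lemma U0_Q: "t \<in> {0..T} \<Longrightarrow> kron Hp (mat 1) ** U0 t = U0 t ** kron Hp (mat 1)"
  by (rule U0_comm_gen) (use comm_Hp in auto)

lemma Kt_bound: "\<exists>kb. \<forall>t\<in>{0..T}. norm (Kt t) \<le> kb"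
proof -
  have "continuous_on {0..T} Kt"
    by (intro continuous_on_add continuous_on_const bounded_linear.continuous_on[OF bl_kron HS_cont])
  then have "compact (Kt ` {0..T})" by (rule compact_continuous_image) simp
  then have "bounded (Kt ` {0..T})" by (rule compact_imp_bounded)
  then show ?thesis unfolding bounded_iff by auto
qed

lemma Pk_sum: "(\<Sum>a\<in>Lam. Pk a) = mat 1"
  by (simp add: kron_sum_left[symmetric] sp_sum[OF Hp_spec] kron_mat1)
lemma Pk_idem: "a \<in> Lam \<Longrightarrow> Pk a ** Pk a = Pk a"
  by (simp add: kron_mult sp_idem[OF Hp_spec])
lemma Pk_herm: "a \<in> Lam \<Longrightarrow> adjoint (Pk a) = Pk a"
  using sp_herm[OF Hp_spec] by (simp add: adj_kron hermitian_def)

lemma diag_zero: "(\<Sum>a\<in>Lam. Pk a ** Vc ** Pk a) ** PP = 0"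
proof -
  have "(\<Sum>a\<in>Lam. Pk a ** Vc ** Pk a) = (\<Sum>a\<in>Lam. Pk a ** V ** Pk a) - cmat_smult (complex_of_real c) (\<Sum>a\<in>Lam. Pk a)"
    by (simp add: matrix_add_ldistrib mm_diff_right mm_diff_left cs_mult_left cs_mult_right sum_subtractf cs_sum
        Pk_idem cong: sum.cong)
  then show ?thesis by (simp add: mm_diff_left pinch Pk_sum cs_mult_left)
qed

abbreviation "gam \<equiv> (\<Sum>a\<in>Lam. \<Sum>b\<in>Lam-{a}. 1 / \<bar>a - b\<bar>)"
abbreviation "Gt t \<equiv> adjoint (U0 t) ** Vc ** U0 t"
abbreviation "Gd t \<equiv> cmat_smult \<i> (adjoint (U0 t) ** Kt t ** Vc ** U0 t)
                    + cmat_smult (- \<i>) (adjoint (U0 t) ** Vc ** Kt t ** U0 t)"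

lemma U0_norm: "t \<in> {0..T} \<Longrightarrow> norm (U0 t) \<le> (real CARD('s \<times> 'b)^2)"
  using U0_unit unitary_norm by blast
lemma U0_adj_norm: "t \<in> {0..T} \<Longrightarrow> norm (adjoint (U0 t)) \<le> (real CARD('s \<times> 'b)^2)"
  using U0_unit unitary_norm unitary_adj by blast

lemma G_deriv: "t \<in> {0..T} \<Longrightarrow> ((\<lambda>t. Gt t) has_vector_derivative Gd t) (at t within {0..T})"
proof -
  assume t: "t \<in> {0..T}"
  have "((\<lambda>t. Gt t) has_vector_derivative
      (adjoint (U0 t) ** Vc) ** cmat_smult (- \<i>) (Kt t ** U0 t)
      + (adjoint (U0 t) ** 0 + adjoint (cmat_smult (- \<i>) (Kt t ** U0 t)) ** Vc) ** U0 t) (at t within {0..T})"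
    by (intro d_mm d_adj has_vector_derivative_const ev_deriv[OF U0_evol t])
  moreover have "(adjoint (U0 t) ** Vc) ** cmat_smult (- \<i>) (Kt t ** U0 t)
      + (adjoint (U0 t) ** 0 + adjoint (cmat_smult (- \<i>) (Kt t ** U0 t)) ** Vc) ** U0 t = Gd t"
    using Kt_herm[OF t] unfolding hermitian_def
    by (simp add: adj_cs adj_mult cs_mult_left cs_mult_right matrix_mul_assoc add.commute)
  ultimately show ?thesis by simp
qed

lemma G_norm: "t \<in> {0..T} \<Longrightarrow> norm (Gt t) \<le> ((real CARD('s \<times> 'b)^3) * ((real CARD('s \<times> 'b)^3) * (real CARD('s \<times> 'b)^2) * (norm (V - cmat_smult (complex_of_real c) (mat 1 :: ('s \<times> 'b) op)))) * (real CARD('s \<times> 'b)^2))"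
  by (intro norm_mm_le U0_norm U0_adj_norm order_refl)

lemma Gd_norm: "t \<in> {0..T} \<Longrightarrow> norm (Kt t) \<le> kb \<Longrightarrow> norm (Gd t) \<le> 2 * ((real CARD('s \<times> 'b)^3) * ((real CARD('s \<times> 'b)^3) * ((real CARD('s \<times> 'b)^3) * (real CARD('s \<times> 'b)^2) * (norm (V - cmat_smult (complex_of_real c) (mat 1 :: ('s \<times> 'b) op)))) * kb) * (real CARD('s \<times> 'b)^2))"
proof -
  assume t: "t \<in> {0..T}" and kb: "norm (Kt t) \<le> kb"
  have 1: "norm (cmat_smult \<i> (adjoint (U0 t) ** Kt t ** Vc ** U0 t)) \<le> (real CARD('s \<times> 'b)^3) * ((real CARD('s \<times> 'b)^3) * ((real CARD('s \<times> 'b)^3) * (real CARD('s \<times> 'b)^2) * kb) * (norm (V - cmat_smult (complex_of_real c) (mat 1 :: ('s \<times> 'b) op)))) * (real CARD('s \<times> 'b)^2)"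
  proof -
    have "norm (adjoint (U0 t) ** Kt t ** Vc ** U0 t) \<le> (real CARD('s \<times> 'b)^3) * ((real CARD('s \<times> 'b)^3) * ((real CARD('s \<times> 'b)^3) * (real CARD('s \<times> 'b)^2) * kb) * (norm (V - cmat_smult (complex_of_real c) (mat 1 :: ('s \<times> 'b) op)))) * (real CARD('s \<times> 'b)^2)"
      by (intro norm_mm_le U0_norm U0_adj_norm order_refl kb t)
    then show ?thesis by (simp only: norm_cs norm_ii mult_1)
  qed
  have 2: "norm (cmat_smult (- \<i>) (adjoint (U0 t) ** Vc ** Kt t ** U0 t)) \<le> (real CARD('s \<times> 'b)^3) * ((real CARD('s \<times> 'b)^3) * ((real CARD('s \<times> 'b)^3) * (real CARD('s \<times> 'b)^2) * (norm (V - cmat_smult (complex_of_real c) (mat 1 :: ('s \<times> 'b) op)))) * kb) * (real CARD('s \<times> 'b)^2)"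
  proof -
    have "norm (adjoint (U0 t) ** Vc ** Kt t ** U0 t) \<le> (real CARD('s \<times> 'b)^3) * ((real CARD('s \<times> 'b)^3) * ((real CARD('s \<times> 'b)^3) * (real CARD('s \<times> 'b)^2) * (norm (V - cmat_smult (complex_of_real c) (mat 1 :: ('s \<times> 'b) op)))) * kb) * (real CARD('s \<times> 'b)^2)"
      by (intro norm_mm_le U0_norm U0_adj_norm order_refl kb t)
    then show ?thesis by (simp only: norm_cs norm_ii norm_minus_cancel mult_1)
  qed
  have "(real CARD('s \<times> 'b)^3) * ((real CARD('s \<times> 'b)^3) * ((real CARD('s \<times> 'b)^3) * (real CARD('s \<times> 'b)^2) * kb) * (norm (V - cmat_smult (complex_of_real c) (mat 1 :: ('s \<times> 'b) op)))) * (real CARD('s \<times> 'b)^2) = (real CARD('s \<times> 'b)^3) * ((real CARD('s \<times> 'b)^3) * ((real CARD('s \<times> 'b)^3) * (real CARD('s \<times> 'b)^2) * (norm (V - cmat_smult (complex_of_real c) (mat 1 :: ('s \<times> 'b) op)))) * kb) * (real CARD('s \<times> 'b)^2)" by (simp add: ac_simps)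
  then show ?thesis using 1 2 norm_triangle_ineq[of "cmat_smult \<i> (adjoint (U0 t) ** Kt t ** Vc ** U0 t)"
      "cmat_smult (- \<i>) (adjoint (U0 t) ** Vc ** Kt t ** U0 t)"] by linarith
qed

lemma Pk_norm: "a \<in> Lam \<Longrightarrow> norm (Pk a) \<le> (\<Sum>a\<in>Lam. norm (kron (Proj a) (mat 1 :: 'b op)))"
  by (rule member_le_sum) (auto simp: sp_fin[OF Hp_spec])

lemma gam_bound: "a \<in> Lam \<Longrightarrow> b \<in> Lam \<Longrightarrow> a \<noteq> b \<Longrightarrow> 1 / \<bar>a - b\<bar> \<le> gam"
proof -
  assume ab: "a \<in> Lam" "b \<in> Lam" "a \<noteq> b"
  have fin: "finite Lam" by (rule sp_fin[OF Hp_spec])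
  have "1 / \<bar>a - b\<bar> \<le> (\<Sum>b\<in>Lam-{a}. 1 / \<bar>a - b\<bar>)"
    by (rule member_le_sum) (use ab fin in auto)
  also have "\<dots> \<le> gam"
    by (rule member_le_sum[where f="\<lambda>a. \<Sum>b\<in>Lam-{a}. 1 / \<bar>a - b\<bar>"]) (use ab fin in \<open>auto intro: sum_nonneg\<close>)
  finally show ?thesis .
qed

lemma per_Ep:
  fixes Ep kb :: real and Up :: "real \<Rightarrow> 's op" and UV :: "real \<Rightarrow> ('s \<times> 'b) op"
    and N :: "('s \<times> 'b) op \<Rightarrow> real"
  assumes Ep: "Ep > 0"
   and Up_ev: "evolution T (\<lambda>t. cmat_smult (complex_of_real Ep) Hp) Up"
   and UV_ev: "evolution T (\<lambda>t. kron (HS t) (mat 1) + kron (mat 1) HB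
                        + kron (cmat_smult (complex_of_real Ep) Hp) (mat 1) + V) UV"
   and kb: "\<forall>t\<in>{0..T}. norm (Kt t) \<le> kb"
   and N: "unitarily_invariant_norm N"
  shows "N (UV T ** PP - cmat_smult (exp (- \<i> * complex_of_real (c * T))) (U0 T ** kron (Up T) (mat 1)) ** PP)
          \<le> (\<Sum>i\<in>UNIV. \<Sum>j\<in>UNIV. N (Emat i j)) * ((T*((real CARD('s \<times> 'b)^3)*((real CARD('s \<times> 'b)^3)*((real CARD('s \<times> 'b)^3)*((real CARD('s \<times> 'b)^3)*(real CARD('s \<times> 'b)^2)*(real CARD('s \<times> 'b)^2))*((real CARD('s \<times> 'b)^3)*((real CARD('s \<times> 'b)^3)*(real CARD('s \<times> 'b)^2)*(norm (V - cmat_smult (complex_of_real c) (mat 1 :: ('s \<times> 'b) op))))*(real CARD('s \<times> 'b)^2)))*((real (card Lam))*(real (card Lam))*gam*((real CARD('s \<times> 'b)^3)*((real CARD('s \<times> 'b)^3)*(\<Sum>a\<in>Lam. norm (kron (Proj a) (mat 1 :: 'b op)))*((real CARD('s \<times> 'b)^3) * ((real CARD('s \<times> 'b)^3) * (real CARD('s \<times> 'b)^2) * (norm (V - cmat_smult (complex_of_real c) (mat 1 :: ('s \<times> 'b) op)))) * (real CARD('s \<times> 'b)^2)))*(\<Sum>a\<in>Lam. norm (kron (Proj a) (mat 1 :: 'b op))))))*(norm (kron P (mat 1 :: 'b op))) + (real CARD('s \<times> 'b)^3)*((real CARD('s \<times> 'b)^3)*((real CARD('s \<times> 'b)^3)*(real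 CARD('s \<times> 'b)^2)*(real CARD('s \<times> 'b)^2))*((real (card Lam))*(real (card Lam))*gam*((real CARD('s \<times> 'b)^3)*((real CARD('s \<times> 'b)^3)*(\<Sum>a\<in>Lam. norm (kron (Proj a) (mat 1 :: 'b op)))*(2*((real CARD('s \<times> 'b)^3)*((real CARD('s \<times> 'b)^3)*((real CARD('s \<times> 'b)^3)*(real CARD('s \<times> 'b)^2)*(norm (V - cmat_smult (complex_of_real c) (mat 1 :: ('s \<times> 'b) op))))*kb)*(real CARD('s \<times> 'b)^2))))*(\<Sum>a\<in>Lam. norm (kron (Proj a) (mat 1 :: 'b op))))))*(norm (kron P (mat 1 :: 'b op)))) + (real CARD('s \<times> 'b)^3)*((real CARD('s \<times> 'b)^3)*((real CARD('s \<times> 'b)^3)*(real CARD('s \<times> 'b)^2)*(real CARD('s \<times> 'b)^2))*((real (card Lam))*(real (card Lam))*gam*((real CARD('s \<times> 'b)^3)*((real CARD('s \<times> 'b)^3)*(\<Sum>a\<in>Lam. norm (kron (Proj a) (mat 1 :: 'b op)))*((real CARD('s \<times> 'b)^3) * ((real CARD('s \<times> 'b)^3) * (real CARD('s \<times> 'b)^2) * (norm (V - cmat_smult (complex_of_real c) (mat 1 :: ('s \<times> 'b) op)))) * (real CARD('s \<times> 'b)^2)))*(\<Sum>a\<in>Lam. norm (kron (Proj a) (mat 1 :: 'b op))))))*(norm (kron P (mat 1 :: 'b op))) + (real CARD('s \<times> 'b)^3)*((real (card Lam))*(real (card Lam))*gam*((real CARD('s \<times> 'b)^3)*((real CARD('s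 \<times> 'b)^3)*(\<Sum>a\<in>Lam. norm (kron (Proj a) (mat 1 :: 'b op)))*((real CARD('s \<times> 'b)^3) * ((real CARD('s \<times> 'b)^3) * (real CARD('s \<times> 'b)^2) * (norm (V - cmat_smult (complex_of_real c) (mat 1 :: ('s \<times> 'b) op)))) * (real CARD('s \<times> 'b)^2)))*(\<Sum>a\<in>Lam. norm (kron (Proj a) (mat 1 :: 'b op)))))*(norm (kron P (mat 1 :: 'b op)))) / Ep)"
proof -
  define e where "e t = exp (\<i> * complex_of_real ((- c) * t))" for t
  define Upk where "Upk t = kron (Up t) (mat 1 :: 'b op)" for t
  define W where "W t = cmat_smult (e t) (U0 t ** Upk t)" for t
  define Psi where "Psi t = adjoint (UV t) ** W t" for t
  define Vt where "Vt t = adjoint (W t) ** Vc ** W t" for t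
  define ex where "ex a b t = exp (\<i> * complex_of_real ((Ep * (a - b)) * t))" for a b t
  define cn where "cn a b = inverse (\<i> * complex_of_real (Ep * (a - b)))" for a b
  define F where "F t = (\<Sum>a\<in>Lam. \<Sum>b\<in>Lam-{a}. cmat_smult (cn a b) (cmat_smult (ex a b t) (Pk a ** Gt t ** Pk b)))" for t
  define Off where "Off t = (\<Sum>a\<in>Lam. \<Sum>b\<in>Lam-{a}. cmat_smult (ex a b t) (Pk a ** Gt t ** Pk b))" for t
  define R where "R t = (\<Sum>a\<in>Lam. \<Sum>b\<in>Lam-{a}. cmat_smult (cn a b) (cmat_smult (ex a b t) (Pk a ** Gd t ** Pk b)))" for t
  have fin: "finite Lam" by (rule sp_fin[OF Hp_spec])
  have Hherm: "hermitian (cmat_smult (complex_of_real Ep) Hp)" by (rule herm_cs_real[OF Hp_herm])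
  have Up_unit: "unitary (Up t)" if "t \<in> {0..T}" for t
    by (rule ev_unitary[OF Up_ev _ that]) (simp add: Hherm)
  have Upk_unit: "unitary (Upk t)" if "t \<in> {0..T}" for t
    unfolding Upk_def by (rule unitary_kron[OF Up_unit[OF that]])
  have e_unit: "cnj (e t) * e t = 1" for t
    unfolding e_def by (simp add: exp_cnj exp_add[symmetric])
  have W_adj: "adjoint (W t) = cmat_smult (cnj (e t)) (adjoint (Upk t) ** adjoint (U0 t))" for t
    unfolding W_def by (simp add: adj_cs adj_mult)
  have W_unit: "unitary (W t)" if t: "t \<in> {0..T}" for t
  proof -
    have "adjoint (W t) ** W t = cmat_smult (cnj (e t) * e t) (adjoint (Upk t) ** (adjoint (U0 t) ** U0 t) ** Upk t)"
      unfolding W_adj by (simp add: W_def cs_mult_left cs_mult_right cs_cs matrix_mul_assoc mult.commute)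
    also have "\<dots> = mat 1"
      using U0_unit[OF t] Upk_unit[OF t] e_unit by (simp add: unitary_def)
    finally show ?thesis unfolding unitary_def using matrix_left_right_inverse by blast
  qed
  have UV_unit: "unitary (UV t)" if "t \<in> {0..T}" for t
    by (rule ev_unitary[OF UV_ev _ that]) (use HS_herm HB_herm Hherm V_herm in \<open>auto intro!: herm_add herm_kron herm_mat1\<close>)
  have Psi_norm: "norm (Psi t) \<le> ((real CARD('s \<times> 'b)^3)*(real CARD('s \<times> 'b)^2)*(real CARD('s \<times> 'b)^2))" if "t \<in> {0..T}" for t
    unfolding Psi_def
    by (intro norm_mm_le unitary_norm unitary_adj UV_unit W_unit that)
  have Vt_norm: "norm (Vt t) \<le> ((real CARD('s \<times> 'b)^3)*((real CARD('s \<times> 'b)^3)*(real CARD('s \<times> 'b)^2)*(norm (V - cmat_smult (complex_of_real c) (mat 1 :: ('s \<times> 'b) op))))*(real CARD('s \<times> 'b)^2))" if "t \<in> {0..T}" for t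
    unfolding Vt_def
    by (intro norm_mm_le unitary_norm unitary_adj W_unit that order_refl)
  have T0': "0 \<in> {0..T}" using T0 by simp
  have Psi0: "Psi 0 = mat 1"
    using U0_evol Up_ev UV_ev by (simp add: Psi_def W_def e_def Upk_def evolution_def kron_mat1)
  have dPsi: "\<forall>t\<in>{0..T}. (Psi has_vector_derivative cmat_smult \<i> (Psi t ** Vt t)) (at t within {0..T})"
  proof
    fix t assume t: "t \<in> {0..T}"
    define HQ where "HQ = kron (cmat_smult (complex_of_real Ep) Hp) (mat 1 :: 'b op)"
    define Hw where "Hw = Kt t + HQ + cmat_smult (complex_of_real c) (mat 1)"
    define HV where "HV = Kt t + HQ + V"
    have dUpk: "(Upk has_vector_derivative cmat_smult (- \<i>) (HQ ** Upk t)) (at t within {0..T})"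
    proof -
      have "(Upk has_vector_derivative kron (cmat_smult (- \<i>) (cmat_smult (complex_of_real Ep) Hp ** Up t)) (mat 1)) (at t within {0..T})"
        unfolding Upk_def[abs_def] by (rule d_kron[OF ev_deriv[OF Up_ev t]])
      then show ?thesis by (simp add: kron_cs_left kron_mult_I Upk_def HQ_def)
    qed
    have de: "(e has_vector_derivative \<i> * complex_of_real (- c) * e t) (at t within {0..T})"
      unfolding e_def[abs_def] by (rule d_exp)
    have dW: "(W has_vector_derivative cmat_smult (- \<i>) (Hw ** W t)) (at t within {0..T})"
    proof -
      have "(W has_vector_derivative cmat_smult (e t) (U0 t ** cmat_smult (- \<i>) (HQ ** Upk t) + cmat_smult (- \<i>) (Kt t ** U0 t) ** Upk t) + cmat_smult (\<i> * complex_of_real (- c) * e t) (U0 t ** Upk t)) (at t within {0..T})"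
        unfolding W_def[abs_def] by (intro d_cs d_mm de dUpk ev_deriv[OF U0_evol t])
      moreover have "U0 t ** HQ = HQ ** U0 t" using U0_Q[OF t] by (simp add: HQ_def kron_cs_left cs_mult_left cs_mult_right)
      ultimately show ?thesis
        by (simp add: W_def Hw_def cs_mult_left cs_mult_right cs_cs matrix_mul_assoc matrix_add_ldistrib mm_add_left cs_add
            mult_ac add_ac)
    qed
    have "(Psi has_vector_derivative adjoint (UV t) ** cmat_smult (- \<i>) (Hw ** W t) + adjoint (cmat_smult (- \<i>) (HV ** UV t)) ** W t) (at t within {0..T})"
      unfolding Psi_def[abs_def] HV_def HQ_def by (intro d_mm d_adj dW[unfolded HQ_def] ev_deriv[OF UV_ev t])
    moreover have "adjoint (UV t) ** cmat_smult (- \<i>) (Hw ** W t) + adjoint (cmat_smult (- \<i>) (HV ** UV t)) ** W t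
        = cmat_smult \<i> (Psi t ** Vt t)"
    proof -
      have hv: "adjoint HV = HV" unfolding HV_def HQ_def
        using HS_herm HB_herm Hherm V_herm t by (auto simp: hermitian_def adj_add adj_kron)
      have "adjoint (UV t) ** cmat_smult (- \<i>) (Hw ** W t) + adjoint (cmat_smult (- \<i>) (HV ** UV t)) ** W t
          = cmat_smult \<i> (adjoint (UV t) ** HV ** W t) - cmat_smult \<i> (adjoint (UV t) ** Hw ** W t)"
        by (simp add: adj_cs adj_mult hv cs_mult_left cs_mult_right cs_neg matrix_mul_assoc mm_neg_left mm_neg_right adj_neg)
      also have "\<dots> = cmat_smult \<i> (adjoint (UV t) ** (HV - Hw) ** W t)"
        by (simp add: cs_diff[symmetric] mm_diff_left mm_diff_right)
      also have "HV - Hw = Vc" unfolding HV_def Hw_def by simp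
      also have "cmat_smult \<i> (adjoint (UV t) ** Vc ** W t) = cmat_smult \<i> (Psi t ** Vt t)"
      proof -
        have "W t ** adjoint (W t) = mat 1" using W_unit[OF t] by (simp add: unitary_def)
        then have "adjoint (UV t) ** Vc ** W t = adjoint (UV t) ** (W t ** adjoint (W t)) ** Vc ** W t" by simp
        then show ?thesis by (simp add: Psi_def Vt_def matrix_mul_assoc)
      qed
      finally show ?thesis .
    qed
    ultimately show "(Psi has_vector_derivative cmat_smult \<i> (Psi t ** Vt t)) (at t within {0..T})" by simp
  qed
  have Upk_eig: "Pk a ** Upk t = cmat_smult (exp (- \<i> * complex_of_real ((Ep * a) * t))) (Pk a)"
    if t: "t \<in> {0..T}" and a: "a \<in> Lam" for t a
  proof -
    have "Proj a ** Up t = cmat_smult (exp (- \<i> * complex_of_real ((Ep * a) * t))) (Proj a)"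
    proof (rule ev_eigen[OF Up_ev _ t])
      show "\<forall>t\<in>{0..T}. Proj a ** cmat_smult (complex_of_real Ep) Hp = cmat_smult (complex_of_real (Ep * a)) (Proj a)"
        using a by (simp add: cs_mult_right sp_eig_left[OF Hp_spec] cs_cs)
    qed
    then show ?thesis by (simp add: Upk_def kron_mult kron_cs_left)
  qed
  have Upk_exp: "Upk t = (\<Sum>a\<in>Lam. cmat_smult (exp (- \<i> * complex_of_real ((Ep * a) * t))) (Pk a))"
    if t: "t \<in> {0..T}" for t
  proof -
    have "Upk t = (\<Sum>a\<in>Lam. Pk a) ** Upk t" by (simp add: Pk_sum)
    also have "\<dots> = (\<Sum>a\<in>Lam. Pk a ** Upk t)" by (simp add: mm_sum_left)
    also have "\<dots> = (\<Sum>a\<in>Lam. cmat_smult (exp (- \<i> * complex_of_real ((Ep * a) * t))) (Pk a))"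
      by (intro sum.cong refl Upk_eig[OF t])
    finally show ?thesis .
  qed
  have coef: "cnj (exp (- \<i> * complex_of_real ((Ep * a) * t))) * exp (- \<i> * complex_of_real ((Ep * b) * t)) = ex a b t" for a b t
    unfolding ex_def by (simp add: exp_cnj exp_add[symmetric] algebra_simps)
  have Vt_exp: "Vt t = (\<Sum>a\<in>Lam. \<Sum>b\<in>Lam. cmat_smult (ex a b t) (Pk a ** Gt t ** Pk b))"
    if t: "t \<in> {0..T}" for t
  proof -
    have "Vt t = cmat_smult (cnj (e t) * e t) (adjoint (Upk t) ** Gt t ** Upk t)"
      unfolding Vt_def W_adj by (simp add: W_def cs_mult_left cs_mult_right cs_cs matrix_mul_assoc mult.commute)
    also have "\<dots> = adjoint (Upk t) ** Gt t ** Upk t" using e_unit by simp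
    also have "\<dots> = (\<Sum>a\<in>Lam. cmat_smult (cnj (exp (- \<i> * complex_of_real ((Ep * a) * t)))) (Pk a)) ** Gt t
                 ** (\<Sum>b\<in>Lam. cmat_smult (exp (- \<i> * complex_of_real ((Ep * b) * t))) (Pk b))"
      by (subst (1 2) Upk_exp[OF t]) (simp add: adj_sum adj_cs Pk_herm cong: sum.cong)
    also have "\<dots> = (\<Sum>a\<in>Lam. \<Sum>b\<in>Lam. cmat_smult (cnj (exp (- \<i> * complex_of_real ((Ep * a) * t)))) (Pk a) ** Gt t
                 ** cmat_smult (exp (- \<i> * complex_of_real ((Ep * b) * t))) (Pk b))"
      by (simp only: mm_sum_left, simp only: mm_sum_right)
    also have "\<dots> = (\<Sum>a\<in>Lam. \<Sum>b\<in>Lam. cmat_smult (ex a b t) (Pk a ** Gt t ** Pk b))"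
    proof (intro sum.cong refl)
      fix a b
      show "cmat_smult (cnj (exp (- \<i> * complex_of_real ((Ep * a) * t)))) (Pk a) ** Gt t
                 ** cmat_smult (exp (- \<i> * complex_of_real ((Ep * b) * t))) (Pk b) = cmat_smult (ex a b t) (Pk a ** Gt t ** Pk b)"
        unfolding coef[symmetric] by (simp only: cs_mult_left cs_mult_right cs_cs mult.commute)
    qed
    finally show ?thesis .
  qed
  have VO: "\<forall>t\<in>{0..T}. Vt t ** PP = Off t ** PP"
  proof
    fix t assume t: "t \<in> {0..T}"
    have ex0: "ex a a t = 1" for a unfolding ex_def by simp
    have "Vt t = (\<Sum>a\<in>Lam. Pk a ** Gt t ** Pk a + (\<Sum>b\<in>Lam-{a}. cmat_smult (ex a b t) (Pk a ** Gt t ** Pk b)))"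
      unfolding Vt_exp[OF t] by (rule sum.cong) (simp_all add: sum.remove[OF fin] ex0)
    also have "\<dots> = (\<Sum>a\<in>Lam. Pk a ** Gt t ** Pk a) + Off t"
      by (simp add: Off_def sum.distrib)
    finally have "Vt t ** PP = (\<Sum>a\<in>Lam. Pk a ** Gt t ** Pk a) ** PP + Off t ** PP"
      by (simp add: mm_add_left)
    moreover have "(\<Sum>a\<in>Lam. Pk a ** Gt t ** Pk a) ** PP = 0"
    proof -
      have "(\<Sum>a\<in>Lam. Pk a ** Gt t ** Pk a) ** PP = (\<Sum>a\<in>Lam. Pk a ** Gt t ** Pk a ** PP)"
        by (simp add: mm_sum_left)
      also have "\<dots> = (\<Sum>a\<in>Lam. adjoint (U0 t) ** (Pk a ** Vc ** Pk a ** PP) ** U0 t)"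
      proof (rule sum.cong[OF refl])
        fix a assume a: "a \<in> Lam"
        show "Pk a ** Gt t ** Pk a ** PP = adjoint (U0 t) ** (Pk a ** Vc ** Pk a ** PP) ** U0 t"
          by (rule sandwich_comm) (use U0_Pk[OF t a] U0_PP[OF t] unitary_comm_adj[OF U0_unit[OF t] U0_Pk[OF t a]] in auto)
      qed
      also have "\<dots> = adjoint (U0 t) ** ((\<Sum>a\<in>Lam. Pk a ** Vc ** Pk a) ** PP) ** U0 t"
        by (simp add: mm_sum_left mm_sum_right)
      also have "\<dots> = 0" by (simp add: diag_zero)
      finally show ?thesis .
    qed
    ultimately show "Vt t ** PP = Off t ** PP" by simp
  qed
  have dF: "\<forall>t\<in>{0..T}. (F has_vector_derivative (Off t + R t)) (at t within {0..T})"
  proof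
    fix t assume t: "t \<in> {0..T}"
    have trm: "((\<lambda>t. cmat_smult (cn a b) (cmat_smult (ex a b t) (Pk a ** Gt t ** Pk b))) has_vector_derivative
        cmat_smult (ex a b t) (Pk a ** Gt t ** Pk b) + cmat_smult (cn a b) (cmat_smult (ex a b t) (Pk a ** Gd t ** Pk b)))
        (at t within {0..T})" if a: "a \<in> Lam" and b: "b \<in> Lam - {a}" for a b
    proof -
      have d: "((\<lambda>t. cmat_smult (cn a b) (cmat_smult (ex a b t) (Pk a ** Gt t ** Pk b))) has_vector_derivative
        cmat_smult (cn a b) (cmat_smult (ex a b t) ((Pk a ** Gt t) ** 0 + (Pk a ** Gd t + 0 ** Gt t) ** Pk b)
           + cmat_smult (\<i> * complex_of_real (Ep * (a - b)) * ex a b t) (Pk a ** Gt t ** Pk b)))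
        (at t within {0..T})"
        unfolding ex_def by (intro d_cs_const d_cs d_mm d_exp has_vector_derivative_const G_deriv t)
      have key: "cn a b * (\<i> * complex_of_real (Ep * (a - b)) * ex a b t) = ex a b t"
        using Ep b by (simp add: cn_def field_simps)
      have eqn: "cmat_smult (cn a b) (cmat_smult (ex a b t) ((Pk a ** Gt t) ** 0 + (Pk a ** Gd t + 0 ** Gt t) ** Pk b)
           + cmat_smult (\<i> * complex_of_real (Ep * (a - b)) * ex a b t) (Pk a ** Gt t ** Pk b))
         = cmat_smult (ex a b t) (Pk a ** Gt t ** Pk b) + cmat_smult (cn a b) (cmat_smult (ex a b t) (Pk a ** Gd t ** Pk b))"
        by (simp only: times0_right times0_left add_0_right add_0_left cs_add cs_cs key add.commute)
      from d eqn show ?thesis by (rule has_vector_derivative_eq_rhs)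
    qed
    have "((\<lambda>t. \<Sum>a\<in>Lam. \<Sum>b\<in>Lam-{a}. cmat_smult (cn a b) (cmat_smult (ex a b t) (Pk a ** Gt t ** Pk b))) has_vector_derivative
        (\<Sum>a\<in>Lam. \<Sum>b\<in>Lam-{a}. cmat_smult (ex a b t) (Pk a ** Gt t ** Pk b) + cmat_smult (cn a b) (cmat_smult (ex a b t) (Pk a ** Gd t ** Pk b))))
        (at t within {0..T})"
      by (intro has_vector_derivative_sum trm)
    then show "(F has_vector_derivative (Off t + R t)) (at t within {0..T})"
      unfolding F_def[abs_def] Off_def R_def by (simp add: sum.distrib)
  qed
  have cn_bound: "cmod (cn a b) \<le> gam / Ep" if a: "a \<in> Lam" and b: "b \<in> Lam - {a}" for a b
  proof -
    have "cmod (cn a b) = inverse (\<bar>Ep * (a - b)\<bar>)"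
      unfolding cn_def by (simp only: norm_inverse norm_mult norm_ii norm_of_real mult_1)
    also have "\<dots> = (1 / \<bar>a - b\<bar>) / Ep"
      using Ep by (simp add: abs_mult divide_simps)
    also have "\<dots> \<le> gam / Ep"
      by (rule divide_right_mono) (use gam_bound a b Ep in auto)
    finally show ?thesis .
  qed
  have gam0: "0 \<le> gam" by (intro sum_nonneg) auto
  have RHO0: "0 \<le> (\<Sum>a\<in>Lam. norm (kron (Proj a) (mat 1 :: 'b op)))" by (intro sum_nonneg) auto
  have F_norm: "norm (F t) \<le> ((real (card Lam))*(real (card Lam))*gam*((real CARD('s \<times> 'b)^3)*((real CARD('s \<times> 'b)^3)*(\<Sum>a\<in>Lam. norm (kron (Proj a) (mat 1 :: 'b op)))*((real CARD('s \<times> 'b)^3) * ((real CARD('s \<times> 'b)^3) * (real CARD('s \<times> 'b)^2) * (norm (V - cmat_smult (complex_of_real c) (mat 1 :: ('s \<times> 'b) op)))) * (real CARD('s \<times> 'b)^2)))*(\<Sum>a\<in>Lam. norm (kron (Proj a) (mat 1 :: 'b op))))) / Ep" if t: "t \<in> {0..T}" for t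
  proof -
    have "norm (F t) \<le> (real (card Lam)) * (real (card Lam)) * (gam / Ep * ((real CARD('s \<times> 'b)^3) * ((real CARD('s \<times> 'b)^3) * (\<Sum>a\<in>Lam. norm (kron (Proj a) (mat 1 :: 'b op))) * ((real CARD('s \<times> 'b)^3) * ((real CARD('s \<times> 'b)^3) * (real CARD('s \<times> 'b)^2) * (norm (V - cmat_smult (complex_of_real c) (mat 1 :: ('s \<times> 'b) op)))) * (real CARD('s \<times> 'b)^2))) * (\<Sum>a\<in>Lam. norm (kron (Proj a) (mat 1 :: 'b op)))))"
      unfolding F_def
    proof (rule dsum_bound[OF fin])
      fix a b assume a: "a \<in> Lam" and b: "b \<in> Lam - {a}"
      have "norm (Pk a ** Gt t ** Pk b) \<le> (real CARD('s \<times> 'b)^3) * ((real CARD('s \<times> 'b)^3) * (\<Sum>a\<in>Lam. norm (kron (Proj a) (mat 1 :: 'b op))) * ((real CARD('s \<times> 'b)^3) * ((real CARD('s \<times> 'b)^3) * (real CARD('s \<times> 'b)^2) * (norm (V - cmat_smult (complex_of_real c) (mat 1 :: ('s \<times> 'b) op)))) * (real CARD('s \<times> 'b)^2))) * (\<Sum>a\<in>Lam. norm (kron (Proj a) (mat 1 :: 'b op)))"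
        using a b by (intro norm_mm_le Pk_norm G_norm t) auto
      then have mm: "cmod (cn a b) * norm (Pk a ** Gt t ** Pk b) \<le> gam / Ep * ((real CARD('s \<times> 'b)^3) * ((real CARD('s \<times> 'b)^3) * (\<Sum>a\<in>Lam. norm (kron (Proj a) (mat 1 :: 'b op))) * ((real CARD('s \<times> 'b)^3) * ((real CARD('s \<times> 'b)^3) * (real CARD('s \<times> 'b)^2) * (norm (V - cmat_smult (complex_of_real c) (mat 1 :: ('s \<times> 'b) op)))) * (real CARD('s \<times> 'b)^2))) * (\<Sum>a\<in>Lam. norm (kron (Proj a) (mat 1 :: 'b op))))"
        by (rule mult_mono[OF cn_bound[OF a b]]) (use gam0 Ep in auto)
      have "norm (cmat_smult (cn a b) (cmat_smult (ex a b t) (Pk a ** Gt t ** Pk b))) = cmod (cn a b) * norm (Pk a ** Gt t ** Pk b)"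
        unfolding norm_cs ex_def by simp
      then show "norm (cmat_smult (cn a b) (cmat_smult (ex a b t) (Pk a ** Gt t ** Pk b))) \<le> gam / Ep * ((real CARD('s \<times> 'b)^3) * ((real CARD('s \<times> 'b)^3) * (\<Sum>a\<in>Lam. norm (kron (Proj a) (mat 1 :: 'b op))) * ((real CARD('s \<times> 'b)^3) * ((real CARD('s \<times> 'b)^3) * (real CARD('s \<times> 'b)^2) * (norm (V - cmat_smult (complex_of_real c) (mat 1 :: ('s \<times> 'b) op)))) * (real CARD('s \<times> 'b)^2))) * (\<Sum>a\<in>Lam. norm (kron (Proj a) (mat 1 :: 'b op))))"
        using mm by simp
    next
      show "0 \<le> gam / Ep * ((real CARD('s \<times> 'b)^3) * ((real CARD('s \<times> 'b)^3) * (\<Sum>a\<in>Lam. norm (kron (Proj a) (mat 1 :: 'b op))) * ((real CARD('s \<times> 'b)^3) * ((real CARD('s \<times> 'b)^3) * (real CARD('s \<times> 'b)^2) * (norm (V - cmat_smult (complex_of_real c) (mat 1 :: ('s \<times> 'b) op)))) * (real CARD('s \<times> 'b)^2))) * (\<Sum>a\<in>Lam. norm (kron (Proj a) (mat 1 :: 'b op))))"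
        using gam0 RHO0 Ep by simp
    qed
    then show ?thesis by (simp add: field_simps)
  qed
  have R_norm: "norm (R t) \<le> ((real (card Lam))*(real (card Lam))*gam*((real CARD('s \<times> 'b)^3)*((real CARD('s \<times> 'b)^3)*(\<Sum>a\<in>Lam. norm (kron (Proj a) (mat 1 :: 'b op)))*(2*((real CARD('s \<times> 'b)^3)*((real CARD('s \<times> 'b)^3)*((real CARD('s \<times> 'b)^3)*(real CARD('s \<times> 'b)^2)*(norm (V - cmat_smult (complex_of_real c) (mat 1 :: ('s \<times> 'b) op))))*kb)*(real CARD('s \<times> 'b)^2))))*(\<Sum>a\<in>Lam. norm (kron (Proj a) (mat 1 :: 'b op))))) / Ep" if t: "t \<in> {0..T}" for t
  proof -
    have "norm (R t) \<le> (real (card Lam)) * (real (card Lam)) * (gam / Ep * ((real CARD('s \<times> 'b)^3) * ((real CARD('s \<times> 'b)^3) * (\<Sum>a\<in>Lam. norm (kron (Proj a) (mat 1 :: 'b op))) * (2*((real CARD('s \<times> 'b)^3)*((real CARD('s \<times> 'b)^3)*((real CARD('s \<times> 'b)^3)*(real CARD('s \<times> 'b)^2)*(norm (V - cmat_smult (complex_of_real c) (mat 1 :: ('s \<times> 'b) op))))*kb)*(real CARD('s \<times> 'b)^2)))) * (\<Sum>a\<in>Lam. norm (kron (Proj a) (mat 1 :: 'b op)))))"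
      unfolding R_def
    proof (rule dsum_bound[OF fin])
      fix a b assume a: "a \<in> Lam" and b: "b \<in> Lam - {a}"
      have "norm (Pk a ** Gd t ** Pk b) \<le> (real CARD('s \<times> 'b)^3) * ((real CARD('s \<times> 'b)^3) * (\<Sum>a\<in>Lam. norm (kron (Proj a) (mat 1 :: 'b op))) * (2*((real CARD('s \<times> 'b)^3)*((real CARD('s \<times> 'b)^3)*((real CARD('s \<times> 'b)^3)*(real CARD('s \<times> 'b)^2)*(norm (V - cmat_smult (complex_of_real c) (mat 1 :: ('s \<times> 'b) op))))*kb)*(real CARD('s \<times> 'b)^2)))) * (\<Sum>a\<in>Lam. norm (kron (Proj a) (mat 1 :: 'b op)))"
        using a b kb t by (intro norm_mm_le Pk_norm Gd_norm t) auto
      then have mm: "cmod (cn a b) * norm (Pk a ** Gd t ** Pk b) \<le> gam / Ep * ((real CARD('s \<times> 'b)^3) * ((real CARD('s \<times> 'b)^3) * (\<Sum>a\<in>Lam. norm (kron (Proj a) (mat 1 :: 'b op))) * (2*((real CARD('s \<times> 'b)^3)*((real CARD('s \<times> 'b)^3)*((real CARD('s \<times> 'b)^3)*(real CARD('s \<times> 'b)^2)*(norm (V - cmat_smult (complex_of_real c) (mat 1 :: ('s \<times> 'b) op))))*kb)*(real CARD('s \<times> 'b)^2)))) * (\<Sum>a\<in>Lam. norm (kron (Proj a) (mat 1 :: 'b op))))"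
        by (rule mult_mono[OF cn_bound[OF a b]]) (use gam0 Ep in auto)
      have "norm (cmat_smult (cn a b) (cmat_smult (ex a b t) (Pk a ** Gd t ** Pk b))) = cmod (cn a b) * norm (Pk a ** Gd t ** Pk b)"
        unfolding norm_cs ex_def by simp
      then show "norm (cmat_smult (cn a b) (cmat_smult (ex a b t) (Pk a ** Gd t ** Pk b))) \<le> gam / Ep * ((real CARD('s \<times> 'b)^3) * ((real CARD('s \<times> 'b)^3) * (\<Sum>a\<in>Lam. norm (kron (Proj a) (mat 1 :: 'b op))) * (2*((real CARD('s \<times> 'b)^3)*((real CARD('s \<times> 'b)^3)*((real CARD('s \<times> 'b)^3)*(real CARD('s \<times> 'b)^2)*(norm (V - cmat_smult (complex_of_real c) (mat 1 :: ('s \<times> 'b) op))))*kb)*(real CARD('s \<times> 'b)^2)))) * (\<Sum>a\<in>Lam. norm (kron (Proj a) (mat 1 :: 'b op))))"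
        using mm by simp
    next
      have "0 \<le> norm (Gd t)" by simp
      then have "0 \<le> (2*((real CARD('s \<times> 'b)^3)*((real CARD('s \<times> 'b)^3)*((real CARD('s \<times> 'b)^3)*(real CARD('s \<times> 'b)^2)*(norm (V - cmat_smult (complex_of_real c) (mat 1 :: ('s \<times> 'b) op))))*kb)*(real CARD('s \<times> 'b)^2)))" using Gd_norm[OF t] kb t by (meson order_trans)
      then show "0 \<le> gam / Ep * ((real CARD('s \<times> 'b)^3) * ((real CARD('s \<times> 'b)^3) * (\<Sum>a\<in>Lam. norm (kron (Proj a) (mat 1 :: 'b op))) * (2*((real CARD('s \<times> 'b)^3)*((real CARD('s \<times> 'b)^3)*((real CARD('s \<times> 'b)^3)*(real CARD('s \<times> 'b)^2)*(norm (V - cmat_smult (complex_of_real c) (mat 1 :: ('s \<times> 'b) op))))*kb)*(real CARD('s \<times> 'b)^2)))) * (\<Sum>a\<in>Lam. norm (kron (Proj a) (mat 1 :: 'b op))))"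
        using gam0 RHO0 Ep by simp
    qed
    then show ?thesis by (simp add: field_simps)
  qed
  have main: "norm (Psi T ** PP - PP) \<le>
    T * ((real CARD('s \<times> 'b)^3) * ((real CARD('s \<times> 'b)^3) * ((real CARD('s \<times> 'b)^3) * ((real CARD('s \<times> 'b)^3)*(real CARD('s \<times> 'b)^2)*(real CARD('s \<times> 'b)^2)) * ((real CARD('s \<times> 'b)^3)*((real CARD('s \<times> 'b)^3)*(real CARD('s \<times> 'b)^2)*(norm (V - cmat_smult (complex_of_real c) (mat 1 :: ('s \<times> 'b) op))))*(real CARD('s \<times> 'b)^2))) * (((real (card Lam))*(real (card Lam))*gam*((real CARD('s \<times> 'b)^3)*((real CARD('s \<times> 'b)^3)*(\<Sum>a\<in>Lam. norm (kron (Proj a) (mat 1 :: 'b op)))*((real CARD('s \<times> 'b)^3) * ((real CARD('s \<times> 'b)^3) * (real CARD('s \<times> 'b)^2) * (norm (V - cmat_smult (complex_of_real c) (mat 1 :: ('s \<times> 'b) op)))) * (real CARD('s \<times> 'b)^2)))*(\<Sum>a\<in>Lam. norm (kron (Proj a) (mat 1 :: 'b op))))) / Ep)) * (norm (kron P (mat 1 :: 'b op))) + (real CARD('s \<times> 'b)^3) * ((real CARD('s \<times> 'b)^3) * ((real CARD('s \<times> 'b)^3)*(real CARD('s \<times> 'b)^2)*(real CARD('s \<times> 'b)^2)) * (((real (card Lam))*(real (card Lam))*gam*((real CARD('s \<times> 'b)^3)*((real CARD('s \<times> 'b)^3)*(\<Sum>a\<in>Lam. norm (kron (Proj a) (mat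 1 :: 'b op)))*(2*((real CARD('s \<times> 'b)^3)*((real CARD('s \<times> 'b)^3)*((real CARD('s \<times> 'b)^3)*(real CARD('s \<times> 'b)^2)*(norm (V - cmat_smult (complex_of_real c) (mat 1 :: ('s \<times> 'b) op))))*kb)*(real CARD('s \<times> 'b)^2))))*(\<Sum>a\<in>Lam. norm (kron (Proj a) (mat 1 :: 'b op))))) / Ep)) * (norm (kron P (mat 1 :: 'b op))))
      + (real CARD('s \<times> 'b)^3) * ((real CARD('s \<times> 'b)^3) * ((real CARD('s \<times> 'b)^3)*(real CARD('s \<times> 'b)^2)*(real CARD('s \<times> 'b)^2)) * (((real (card Lam))*(real (card Lam))*gam*((real CARD('s \<times> 'b)^3)*((real CARD('s \<times> 'b)^3)*(\<Sum>a\<in>Lam. norm (kron (Proj a) (mat 1 :: 'b op)))*((real CARD('s \<times> 'b)^3) * ((real CARD('s \<times> 'b)^3) * (real CARD('s \<times> 'b)^2) * (norm (V - cmat_smult (complex_of_real c) (mat 1 :: ('s \<times> 'b) op)))) * (real CARD('s \<times> 'b)^2)))*(\<Sum>a\<in>Lam. norm (kron (Proj a) (mat 1 :: 'b op))))) / Ep)) * (norm (kron P (mat 1 :: 'b op))) + (real CARD('s \<times> 'b)^3) * (((real (card Lam))*(real (card Lam))*gam*((real CARD('s \<times> 'b)^3)*((real CARD('s \<times> 'b)^3)*(\<Sum>a\<in>Lam. norm (kron (Proj a) (mat 1 :: 'b op)))*((real CARD('s \<times> 'b)^3) * ((real CARD('s \<times> 'b)^3) * (real CARD('s \<times> 'b)^2)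 * (norm (V - cmat_smult (complex_of_real c) (mat 1 :: ('s \<times> 'b) op)))) * (real CARD('s \<times> 'b)^2)))*(\<Sum>a\<in>Lam. norm (kron (Proj a) (mat 1 :: 'b op))))) / Ep) * (norm (kron P (mat 1 :: 'b op)))"
    by (rule core[OF T0 dPsi dF VO Psi0]) (use Psi_norm Vt_norm F_norm R_norm in auto)
  also have "\<dots> = (T*((real CARD('s \<times> 'b)^3)*((real CARD('s \<times> 'b)^3)*((real CARD('s \<times> 'b)^3)*((real CARD('s \<times> 'b)^3)*(real CARD('s \<times> 'b)^2)*(real CARD('s \<times> 'b)^2))*((real CARD('s \<times> 'b)^3)*((real CARD('s \<times> 'b)^3)*(real CARD('s \<times> 'b)^2)*(norm (V - cmat_smult (complex_of_real c) (mat 1 :: ('s \<times> 'b) op))))*(real CARD('s \<times> 'b)^2)))*((real (card Lam))*(real (card Lam))*gam*((real CARD('s \<times> 'b)^3)*((real CARD('s \<times> 'b)^3)*(\<Sum>a\<in>Lam. norm (kron (Proj a) (mat 1 :: 'b op)))*((real CARD('s \<times> 'b)^3) * ((real CARD('s \<times> 'b)^3) * (real CARD('s \<times> 'b)^2) * (norm (V - cmat_smult (complex_of_real c) (mat 1 :: ('s \<times> 'b) op)))) * (real CARD('s \<times> 'b)^2)))*(\<Sum>a\<in>Lam. norm (kron (Proj a) (mat 1 :: 'b op))))))*(norm (kron P (mat 1 :: 'b op))) + (real CARD('s \<times> 'b)^3)*((real CARD('s \<times> 'b)^3)*((real CARD('s \<times> 'b)^3)*(real CARD('s \<times> 'b)^2)*(real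 CARD('s \<times> 'b)^2))*((real (card Lam))*(real (card Lam))*gam*((real CARD('s \<times> 'b)^3)*((real CARD('s \<times> 'b)^3)*(\<Sum>a\<in>Lam. norm (kron (Proj a) (mat 1 :: 'b op)))*(2*((real CARD('s \<times> 'b)^3)*((real CARD('s \<times> 'b)^3)*((real CARD('s \<times> 'b)^3)*(real CARD('s \<times> 'b)^2)*(norm (V - cmat_smult (complex_of_real c) (mat 1 :: ('s \<times> 'b) op))))*kb)*(real CARD('s \<times> 'b)^2))))*(\<Sum>a\<in>Lam. norm (kron (Proj a) (mat 1 :: 'b op))))))*(norm (kron P (mat 1 :: 'b op)))) + (real CARD('s \<times> 'b)^3)*((real CARD('s \<times> 'b)^3)*((real CARD('s \<times> 'b)^3)*(real CARD('s \<times> 'b)^2)*(real CARD('s \<times> 'b)^2))*((real (card Lam))*(real (card Lam))*gam*((real CARD('s \<times> 'b)^3)*((real CARD('s \<times> 'b)^3)*(\<Sum>a\<in>Lam. norm (kron (Proj a) (mat 1 :: 'b op)))*((real CARD('s \<times> 'b)^3) * ((real CARD('s \<times> 'b)^3) * (real CARD('s \<times> 'b)^2) * (norm (V - cmat_smult (complex_of_real c) (mat 1 :: ('s \<times> 'b) op)))) * (real CARD('s \<times> 'b)^2)))*(\<Sum>a\<in>Lam. norm (kron (Proj a) (mat 1 :: 'b op))))))*(norm (kron P (mat 1 :: 'b op))) + (real CARD('s \<times> 'b)^3)*((real (card Lam))*(real (card Lam))*gam*((real CARD('s \<times> 'b)^3)*((real CARD('s \<times> 'b)^3)*(\<Sum>a\<in>Lam.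 norm (kron (Proj a) (mat 1 :: 'b op)))*((real CARD('s \<times> 'b)^3) * ((real CARD('s \<times> 'b)^3) * (real CARD('s \<times> 'b)^2) * (norm (V - cmat_smult (complex_of_real c) (mat 1 :: ('s \<times> 'b) op)))) * (real CARD('s \<times> 'b)^2)))*(\<Sum>a\<in>Lam. norm (kron (Proj a) (mat 1 :: 'b op)))))*(norm (kron P (mat 1 :: 'b op)))) / Ep" using Ep by (simp add: field_simps)
  finally have main': "norm (Psi T ** PP - PP) \<le> (T*((real CARD('s \<times> 'b)^3)*((real CARD('s \<times> 'b)^3)*((real CARD('s \<times> 'b)^3)*((real CARD('s \<times> 'b)^3)*(real CARD('s \<times> 'b)^2)*(real CARD('s \<times> 'b)^2))*((real CARD('s \<times> 'b)^3)*((real CARD('s \<times> 'b)^3)*(real CARD('s \<times> 'b)^2)*(norm (V - cmat_smult (complex_of_real c) (mat 1 :: ('s \<times> 'b) op))))*(real CARD('s \<times> 'b)^2)))*((real (card Lam))*(real (card Lam))*gam*((real CARD('s \<times> 'b)^3)*((real CARD('s \<times> 'b)^3)*(\<Sum>a\<in>Lam. norm (kron (Proj a) (mat 1 :: 'b op)))*((real CARD('s \<times> 'b)^3) * ((real CARD('s \<times> 'b)^3) * (real CARD('s \<times> 'b)^2) * (norm (V - cmat_smult (complex_of_real c) (mat 1 :: ('s \<times> 'b) op)))) * (real CARD('s \<times> 'b)^2)))*(\<Sum>a\<in>Lam. norm (kron (Proj a) (mat 1 :: 'b op))))))*(norm (kron P (mat 1 :: 'b op))) + (real CARD('s \<times>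 'b)^3)*((real CARD('s \<times> 'b)^3)*((real CARD('s \<times> 'b)^3)*(real CARD('s \<times> 'b)^2)*(real CARD('s \<times> 'b)^2))*((real (card Lam))*(real (card Lam))*gam*((real CARD('s \<times> 'b)^3)*((real CARD('s \<times> 'b)^3)*(\<Sum>a\<in>Lam. norm (kron (Proj a) (mat 1 :: 'b op)))*(2*((real CARD('s \<times> 'b)^3)*((real CARD('s \<times> 'b)^3)*((real CARD('s \<times> 'b)^3)*(real CARD('s \<times> 'b)^2)*(norm (V - cmat_smult (complex_of_real c) (mat 1 :: ('s \<times> 'b) op))))*kb)*(real CARD('s \<times> 'b)^2))))*(\<Sum>a\<in>Lam. norm (kron (Proj a) (mat 1 :: 'b op))))))*(norm (kron P (mat 1 :: 'b op)))) + (real CARD('s \<times> 'b)^3)*((real CARD('s \<times> 'b)^3)*((real CARD('s \<times> 'b)^3)*(real CARD('s \<times> 'b)^2)*(real CARD('s \<times> 'b)^2))*((real (card Lam))*(real (card Lam))*gam*((real CARD('s \<times> 'b)^3)*((real CARD('s \<times> 'b)^3)*(\<Sum>a\<in>Lam. norm (kron (Proj a) (mat 1 :: 'b op)))*((real CARD('s \<times> 'b)^3) * ((real CARD('s \<times> 'b)^3) * (real CARD('s \<times> 'b)^2) * (norm (V - cmat_smult (complex_of_real c) (mat 1 :: ('s \<times> 'b) op)))) * (real CARD('s \<times> 'b)^2)))*(\<Sum>a\<in>Lam. norm (kron (Proj a) (mat 1 :: 'b op))))))*(norm (kron P (mat 1 :: 'b op))) + (real CARD('s \<times> 'b)^3)*((real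 (card Lam))*(real (card Lam))*gam*((real CARD('s \<times> 'b)^3)*((real CARD('s \<times> 'b)^3)*(\<Sum>a\<in>Lam. norm (kron (Proj a) (mat 1 :: 'b op)))*((real CARD('s \<times> 'b)^3) * ((real CARD('s \<times> 'b)^3) * (real CARD('s \<times> 'b)^2) * (norm (V - cmat_smult (complex_of_real c) (mat 1 :: ('s \<times> 'b) op)))) * (real CARD('s \<times> 'b)^2)))*(\<Sum>a\<in>Lam. norm (kron (Proj a) (mat 1 :: 'b op)))))*(norm (kron P (mat 1 :: 'b op)))) / Ep" .
  have TT: "T \<in> {0..T}" using T0 by simp
  have "UV T ** PP - cmat_smult (exp (- \<i> * complex_of_real (c * T))) (U0 T ** kron (Up T) (mat 1)) ** PP
        = UV T ** PP - W T ** PP"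
    by (simp add: W_def e_def Upk_def)
  also have "\<dots> = UV T ** (PP - Psi T ** PP)"
    using UV_unit[OF TT] by (simp add: Psi_def mm_diff_right matrix_mul_assoc unitary_def)
  finally have eqT: "UV T ** PP - cmat_smult (exp (- \<i> * complex_of_real (c * T))) (U0 T ** kron (Up T) (mat 1)) ** PP
        = UV T ** (PP - Psi T ** PP)" .
  have "N (UV T ** (PP - Psi T ** PP)) = N (PP - Psi T ** PP)"
    by (rule uin_unitary_left[OF N UV_unit[OF TT]])
  also have "\<dots> \<le> (\<Sum>i\<in>UNIV. \<Sum>j\<in>UNIV. N (Emat i j)) * norm (PP - Psi T ** PP)"
    by (rule uin_bound[OF N])
  also have "\<dots> \<le> (\<Sum>i\<in>UNIV. \<Sum>j\<in>UNIV. N (Emat i j)) * ((T*((real CARD('s \<times> 'b)^3)*((real CARD('s \<times> 'b)^3)*((real CARD('s \<times> 'b)^3)*((real CARD('s \<times> 'b)^3)*(real CARD('s \<times> 'b)^2)*(real CARD('s \<times> 'b)^2))*((real CARD('s \<times> 'b)^3)*((real CARD('s \<times> 'b)^3)*(real CARD('s \<times> 'b)^2)*(norm (V - cmat_smult (complex_of_real c) (mat 1 :: ('s \<times> 'b) op))))*(real CARD('s \<times> 'b)^2)))*((real (card Lam))*(real (card Lam))*gam*((real CARD('s \<times> 'b)^3)*((real CARD('s \<times> 'b)^3)*(\<Sum>a\<in>Lam. norm (kron (Proj a) (mat 1 :: 'b op)))*((real CARD('s \<times> 'b)^3) * ((real CARD('s \<times> 'b)^3) * (real CARD('s \<times> 'b)^2)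 * (norm (V - cmat_smult (complex_of_real c) (mat 1 :: ('s \<times> 'b) op)))) * (real CARD('s \<times> 'b)^2)))*(\<Sum>a\<in>Lam. norm (kron (Proj a) (mat 1 :: 'b op))))))*(norm (kron P (mat 1 :: 'b op))) + (real CARD('s \<times> 'b)^3)*((real CARD('s \<times> 'b)^3)*((real CARD('s \<times> 'b)^3)*(real CARD('s \<times> 'b)^2)*(real CARD('s \<times> 'b)^2))*((real (card Lam))*(real (card Lam))*gam*((real CARD('s \<times> 'b)^3)*((real CARD('s \<times> 'b)^3)*(\<Sum>a\<in>Lam. norm (kron (Proj a) (mat 1 :: 'b op)))*(2*((real CARD('s \<times> 'b)^3)*((real CARD('s \<times> 'b)^3)*((real CARD('s \<times> 'b)^3)*(real CARD('s \<times> 'b)^2)*(norm (V - cmat_smult (complex_of_real c) (mat 1 :: ('s \<times> 'b) op))))*kb)*(real CARD('s \<times> 'b)^2))))*(\<Sum>a\<in>Lam. norm (kron (Proj a) (mat 1 :: 'b op))))))*(norm (kron P (mat 1 :: 'b op)))) + (real CARD('s \<times> 'b)^3)*((real CARD('s \<times> 'b)^3)*((real CARD('s \<times> 'b)^3)*(real CARD('s \<times> 'b)^2)*(real CARD('s \<times> 'b)^2))*((real (card Lam))*(real (card Lam))*gam*((real CARD('s \<times> 'b)^3)*((real CARD('s \<times> 'b)^3)*(\<Sum>a\<in>Lam. norm (kron (Proj a) (mat 1 :: 'b op)))*((real CARD('s \<times> 'b)^3) * ((real CARD('s \<times> 'b)^3) * (real CARD('s \<times> 'b)^2) * (norm (V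 - cmat_smult (complex_of_real c) (mat 1 :: ('s \<times> 'b) op)))) * (real CARD('s \<times> 'b)^2)))*(\<Sum>a\<in>Lam. norm (kron (Proj a) (mat 1 :: 'b op))))))*(norm (kron P (mat 1 :: 'b op))) + (real CARD('s \<times> 'b)^3)*((real (card Lam))*(real (card Lam))*gam*((real CARD('s \<times> 'b)^3)*((real CARD('s \<times> 'b)^3)*(\<Sum>a\<in>Lam. norm (kron (Proj a) (mat 1 :: 'b op)))*((real CARD('s \<times> 'b)^3) * ((real CARD('s \<times> 'b)^3) * (real CARD('s \<times> 'b)^2) * (norm (V - cmat_smult (complex_of_real c) (mat 1 :: ('s \<times> 'b) op)))) * (real CARD('s \<times> 'b)^2)))*(\<Sum>a\<in>Lam. norm (kron (Proj a) (mat 1 :: 'b op)))))*(norm (kron P (mat 1 :: 'b op)))) / Ep)"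
    by (rule mult_left_mono) (use main' in \<open>simp_all add: norm_minus_commute sum_nonneg uin_nonneg[OF N]\<close>)
  finally show ?thesis unfolding eqT .
qed

end

theorem theorem1:
  fixes T c :: real
    and HS :: "real \<Rightarrow> 's::finite op" and HB :: "'b::finite op"
    and Hp :: "'s op" and Lam :: "real set" and Proj :: "real \<Rightarrow> 's op"
    and V :: "('s \<times> 'b) op" and P :: "'s op"
    and U0 :: "real \<Rightarrow> ('s \<times> 'b) op"
    and Up :: "real \<Rightarrow> real \<Rightarrow> 's op"
    and UV :: "real \<Rightarrow> real \<Rightarrow> ('s \<times> 'b) op"
    and N :: "('s \<times> 'b) op \<Rightarrow> real"
  assumes T_pos: "T > 0"
    and HS_cont: "continuous_on {0..T} HS"
    and HS_herm: "\<forall>t\<in>{0..T}. hermitian (HS t)"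
    and HB_herm: "hermitian HB"
    and Hp_herm: "hermitian Hp"
    and Hp_spec: "spectral_decomp Hp Lam Proj"
    and V_herm: "hermitian V"
    and P_proj: "orth_proj P"
    and comm_P: "\<forall>t\<in>{0..T}. HS t ** P = P ** HS t"
    and comm_Hp: "\<forall>t\<in>{0..T}. HS t ** Hp = Hp ** HS t"
    and pinch: "(\<Sum>a\<in>Lam. kron (Proj a) (mat 1) ** V ** kron (Proj a) (mat 1)) ** kron P (mat 1)
                 = cmat_smult (complex_of_real c) (kron P (mat 1))"
    and U0_evol: "evolution T (\<lambda>t. kron (HS t) (mat 1) + kron (mat 1) HB) U0"
    and Up_evol: "\<forall>Ep>0. evolution T (\<lambda>t. cmat_smult (complex_of_real Ep) Hp) (Up Ep)"
    and UV_evol: "\<forall>Ep>0. evolution T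
                   (\<lambda>t. kron (HS t) (mat 1) + kron (mat 1) HB
                        + kron (cmat_smult (complex_of_real Ep) Hp) (mat 1) + V) (UV Ep)"
    and N_ui: "unitarily_invariant_norm N"
  shows "((\<lambda>Ep. N (UV Ep T ** kron P (mat 1)
            - cmat_smult (exp (- \<i> * complex_of_real (c * T))) (U0 T ** kron (Up Ep T) (mat 1))
              ** kron P (mat 1))) \<longlongrightarrow> 0) at_top"
proof -
  obtain kb where kb: "\<forall>t\<in>{0..T}. norm (kron (HS t) (mat 1) + kron (mat 1) HB) \<le> kb"
    using Kt_bound[OF T_pos HS_cont HS_herm HB_herm Hp_herm Hp_spec V_herm P_proj comm_P comm_Hp pinch U0_evol]
    by blast
  define cN where "cN = (\<Sum>i\<in>UNIV. \<Sum>j\<in>UNIV. N (Emat i j))"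
  define Z where "Z = (T*((real CARD('s \<times> 'b)^3)*((real CARD('s \<times> 'b)^3)*((real CARD('s \<times> 'b)^3)*((real CARD('s \<times> 'b)^3)*(real CARD('s \<times> 'b)^2)*(real CARD('s \<times> 'b)^2))*((real CARD('s \<times> 'b)^3)*((real CARD('s \<times> 'b)^3)*(real CARD('s \<times> 'b)^2)*(norm (V - cmat_smult (complex_of_real c) (mat 1 :: ('s \<times> 'b) op))))*(real CARD('s \<times> 'b)^2)))*((real (card Lam))*(real (card Lam))*(\<Sum>a\<in>Lam. \<Sum>b\<in>Lam-{a}. 1 / \<bar>a - b\<bar>)*((real CARD('s \<times> 'b)^3)*((real CARD('s \<times> 'b)^3)*(\<Sum>a\<in>Lam. norm (kron (Proj a) (mat 1 :: 'b op)))*((real CARD('s \<times> 'b)^3) * ((real CARD('s \<times> 'b)^3) * (real CARD('s \<times> 'b)^2) * (norm (V - cmat_smult (complex_of_real c) (mat 1 :: ('s \<times> 'b) op)))) * (real CARD('s \<times> 'b)^2)))*(\<Sum>a\<in>Lam. norm (kron (Proj a) (mat 1 :: 'b op))))))*(norm (kron P (mat 1 :: 'b op))) + (real CARD('s \<times> 'b)^3)*((real CARD('s \<times> 'b)^3)*((real CARD('s \<times> 'b)^3)*(real CARD('s \<times> 'b)^2)*(real CARD('s \<times> 'b)^2))*((real (card Lam))*(real (card Lam))*(\<Sum>a\<in>Lam. \<Sum>b\<in>Lam-{a}. 1 / \<bar>a - b\<bar>)*((real CARD('s \<times> 'b)^3)*((real CARD('s \<times> 'b)^3)*(\<Sum>a\<in>Lam.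 norm (kron (Proj a) (mat 1 :: 'b op)))*(2*((real CARD('s \<times> 'b)^3)*((real CARD('s \<times> 'b)^3)*((real CARD('s \<times> 'b)^3)*(real CARD('s \<times> 'b)^2)*(norm (V - cmat_smult (complex_of_real c) (mat 1 :: ('s \<times> 'b) op))))*kb)*(real CARD('s \<times> 'b)^2))))*(\<Sum>a\<in>Lam. norm (kron (Proj a) (mat 1 :: 'b op))))))*(norm (kron P (mat 1 :: 'b op)))) + (real CARD('s \<times> 'b)^3)*((real CARD('s \<times> 'b)^3)*((real CARD('s \<times> 'b)^3)*(real CARD('s \<times> 'b)^2)*(real CARD('s \<times> 'b)^2))*((real (card Lam))*(real (card Lam))*(\<Sum>a\<in>Lam. \<Sum>b\<in>Lam-{a}. 1 / \<bar>a - b\<bar>)*((real CARD('s \<times> 'b)^3)*((real CARD('s \<times> 'b)^3)*(\<Sum>a\<in>Lam. norm (kron (Proj a) (mat 1 :: 'b op)))*((real CARD('s \<times> 'b)^3) * ((real CARD('s \<times> 'b)^3) * (real CARD('s \<times> 'b)^2) * (norm (V - cmat_smult (complex_of_real c) (mat 1 :: ('s \<times> 'b) op)))) * (real CARD('s \<times> 'b)^2)))*(\<Sum>a\<in>Lam. norm (kron (Proj a) (mat 1 :: 'b op))))))*(norm (kron P (mat 1 :: 'b op))) + (real CARD('s \<times> 'b)^3)*((real (card Lam))*(real (card Lam))*(\<Sum>a\<in>Lam. \<Sum>b\<in>Lam-{a}. 1 / \<bar>a - b\<bar>)*((real CARD('s \<times> 'b)^3)*((real CARD('s \<times> 'b)^3)*(\<Sum>a\<in>Lam.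 norm (kron (Proj a) (mat 1 :: 'b op)))*((real CARD('s \<times> 'b)^3) * ((real CARD('s \<times> 'b)^3) * (real CARD('s \<times> 'b)^2) * (norm (V - cmat_smult (complex_of_real c) (mat 1 :: ('s \<times> 'b) op)))) * (real CARD('s \<times> 'b)^2)))*(\<Sum>a\<in>Lam. norm (kron (Proj a) (mat 1 :: 'b op)))))*(norm (kron P (mat 1 :: 'b op))))"
  let ?f = "\<lambda>Ep. N (UV Ep T ** kron P (mat 1)
            - cmat_smult (exp (- \<i> * complex_of_real (c * T))) (U0 T ** kron (Up Ep T) (mat 1))
              ** kron P (mat 1))"
  have le: "?f Ep \<le> cN * (Z / Ep)" if Ep: "Ep > 0" for Ep
    unfolding cN_def Z_def
    by (rule per_Ep[OF T_pos HS_cont HS_herm HB_herm Hp_herm Hp_spec V_herm P_proj comm_P comm_Hp pinch U0_evol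
          Ep Up_evol[rule_format, OF Ep] UV_evol[rule_format, OF Ep] kb N_ui])
  have ge: "0 \<le> ?f Ep" for Ep by (rule uin_nonneg[OF N_ui])
  have lim: "((\<lambda>Ep. cN * (Z / Ep)) \<longlongrightarrow> 0) at_top"
    by (intro tendsto_mult_right_zero tendsto_divide_0[OF tendsto_const]
          filterlim_at_top_imp_at_infinity filterlim_ident)
  show ?thesis
  proof (rule tendsto_sandwich[OF _ _ tendsto_const lim])
    show "\<forall>\<^sub>F Ep in at_top. 0 \<le> ?f Ep" using ge by simp
    show "\<forall>\<^sub>F Ep in at_top. ?f Ep \<le> cN * (Z / Ep)"
      using eventually_gt_at_top[of 0] by eventually_elim (rule le)
  qed
qed

end
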